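(* Assume $\alpha\in(0,2)\cap(0,d]$ and let $\nu=1+\alpha/2$. Then for every $\theta\in(0,1)$ there is $C>0$ such that $|\Pi^n_{0,0}|((\Delta_n^{1-\theta},\infty)\times\mathbb R^d\times\mathbb R^d)\le C\Delta_n^{\nu\theta}$ for all $n$.
   Context: Noise covariance: either $\Lambda(\mathrm dy,\mathrm dz)=c_\alpha|z-y|^{-\alpha}\mathrm dy\mathrm dz$ with $0<\alpha<\min(d,2)$, $c_\alpha=\pi^{d/2-\alpha}\Gamma(\alpha/2)/\Gamma((d-\alpha)/2)$, or $d=1$, $\Lambda(\mathrm dy,\mathrm dz)=\delta_z(\mathrm dy)\mathrm dz$ ($\alpha:=1$). $G_x(t)=(2\pi\kappa t)^{-d/2}e^{-|x|^2/(2\kappa t)-\lambda t}\mathbf 1_{t>0}$, $\kappa,\lambda>0$; $0<\Delta_n\to0$, $\Delta_n<1$; $\tau_n^2=\int_0^\infty\int\int(G_y(s)-G_y(s-\Delta_n))(G_z(s)-G_z(s-\Delta_n))\Lambda(\mathrm dy,\mathrm dz)\mathrm ds$; $|\Pi^n_{0,0}|(A)=\int\int\int_A\frac{|G_y(s)-G_y(s-\Delta_n)||G_z(s)-G_z(s-\Delta_n)|}{\tau_n^2}\mathrm ds\,\Lambda(\mathrm dy,\mathrm dz)$. *)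

theory Defs
  imports "HOL-Analysis.Analysis"
begin

definition heatG :: "real \<Rightarrow> real \<Rightarrow> 'a::euclidean_space \<Rightarrow> real \<Rightarrow> real" where
  "heatG \<kappa> lam x t = (if t > 0 then
     (2 * pi * \<kappa> * t) powr (- real DIM('a) / 2) * exp (- (norm x)\<^sup>2 / (2 * \<kappa> * t) - lam * t)
   else 0)"

definition dG :: "real \<Rightarrow> real \<Rightarrow> real \<Rightarrow> 'a::euclidean_space \<Rightarrow> real \<Rightarrow> real" where
  "dG \<kappa> lam \<Delta> y s = heatG \<kappa> lam y s - heatG \<kappa> lam y (s - \<Delta>)"

definition riesz_const :: "nat \<Rightarrow> real \<Rightarrow> real" where
  "riesz_const d \<alpha> = pi powr (real d / 2 - \<alpha>) * Gamma (\<alpha> / 2) / Gamma ((real d - \<alpha>) / 2)"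

definition riesz_cov :: "real \<Rightarrow> ('a::euclidean_space \<times> 'a) measure" where
  "riesz_cov \<alpha> = density (lborel \<Otimes>\<^sub>M lborel)
      (\<lambda>(y, z). ennreal (riesz_const DIM('a) \<alpha> * norm (z - y) powr (- \<alpha>)))"

text \<open>White-noise covariance delta_z(dy) dz: image of Lebesgue measure under z |-> (z,z).\<close>
definition white_cov :: "('a::euclidean_space \<times> 'a) measure" where
  "white_cov = distr lborel (lborel \<Otimes>\<^sub>M lborel) (\<lambda>z. (z, z))"

definition noise_cov :: "real \<Rightarrow> ('a::euclidean_space \<times> 'a) measure \<Rightarrow> bool" where
  "noise_cov \<alpha> \<Lambda> \<longleftrightarrow>
     (0 < \<alpha> \<and> \<alpha> < min (real DIM('a)) 2 \<and> \<Lambda> = riesz_cov \<alpha>) \<or>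
     (DIM('a) = 1 \<and> \<alpha> = 1 \<and> \<Lambda> = white_cov)"

definition tau2 :: "real \<Rightarrow> real \<Rightarrow> ('a::euclidean_space \<times> 'a) measure \<Rightarrow> real \<Rightarrow> real" where
  "tau2 \<kappa> lam \<Lambda> \<Delta> =
     (LINT s:{0<..}|lborel. (LINT p|\<Lambda>. dG \<kappa> lam \<Delta> (fst p) s * dG \<kappa> lam \<Delta> (snd p) s))"

definition Pi_abs :: "real \<Rightarrow> real \<Rightarrow> ('a::euclidean_space \<times> 'a) measure \<Rightarrow> real
      \<Rightarrow> (real \<times> 'a \<times> 'a) set \<Rightarrow> ennreal" where
  "Pi_abs \<kappa> lam \<Lambda> \<Delta> A =
     (\<integral>\<^sup>+ p. (\<integral>\<^sup>+ s. indicator ({0<..} \<times> UNIV) (s, fst p, snd p) * indicator A (s, fst p, snd p) *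
        ennreal (\<bar>dG \<kappa> lam \<Delta> (fst p) s\<bar> * \<bar>dG \<kappa> lam \<Delta> (snd p) s\<bar> / tau2 \<kappa> lam \<Lambda> \<Delta>) \<partial>lborel) \<partial>\<Lambda>)"

end

theory Submission
  imports Defs
begin

lemma exp_neg_sq_le: "exp (- (t::real)\<^sup>2) \<le> exp (1/4) * exp (- \<bar>t\<bar>)"
proof -
  have "- t\<^sup>2 \<le> 1/4 - \<bar>t\<bar>"
  proof -
    have "0 \<le> (\<bar>t\<bar> - 1/2)^2" by simp
    then show ?thesis by (simp add: power2_eq_square algebra_simps abs_mult_self_eq)
  qed
  then show ?thesis by (simp add: exp_add[symmetric])
qed

lemma half_line_gamma_fin:
  assumes "0 \<le> \<beta>" "\<beta> < 1"
  shows "(\<integral>\<^sup>+t. ennreal (indicator {0..} t * (t powr (-\<beta>) * exp (- t))) \<partial>lborel) < \<infinity>"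
proof -
  have "(\<integral>\<^sup>+t. ennreal (indicator {0..} t * (t powr (-\<beta>) * exp (- t))) \<partial>lborel)
      = (\<integral>\<^sup>+t. ennreal (indicator {0..} t * t powr ((1-\<beta>) - 1) / exp t) \<partial>lborel)"
    by (intro nn_integral_cong) (simp add: exp_minus field_simps)
  also have "\<dots> = Gamma (1-\<beta>)"
    using Gamma_conv_nn_integral_real[of "1-\<beta>"] assms by simp
  finally show ?thesis by simp
qed

lemma gauss1d_powr_fin:
  assumes "0 \<le> \<beta>" "\<beta> < 1"
  shows "(\<integral>\<^sup>+t. ennreal (\<bar>t\<bar> powr (-\<beta>) * exp (- t\<^sup>2)) \<partial>lborel) < \<infinity>"
proof -
  define h where "h t = ennreal (indicator {0..} t * (t powr (-\<beta>) * exp (- t)))" for t :: real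
  have hm[measurable]: "h \<in> borel_measurable borel" unfolding h_def by measurable
  have "(\<integral>\<^sup>+t. ennreal (\<bar>t\<bar> powr (-\<beta>) * exp (- t\<^sup>2)) \<partial>lborel)
      \<le> (\<integral>\<^sup>+t. ennreal (exp (1/4)) * (h t + h (0 + (-1) * t)) \<partial>lborel)"
  proof (intro nn_integral_mono)
    fix t :: real
    have "\<bar>t\<bar> powr (-\<beta>) * exp (- t\<^sup>2) \<le> \<bar>t\<bar> powr (-\<beta>) * (exp (1/4) * exp (- \<bar>t\<bar>))"
      by (intro mult_left_mono exp_neg_sq_le) simp
    also have "\<dots> = exp (1/4) * (indicator {0..} t * (t powr (-\<beta>) * exp (- t))
          + indicator {0..} (-t) * ((-t) powr (-\<beta>) * exp (- (-t))))"
      by (cases "t \<ge> 0") (auto simp: indicator_def)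
    finally show "ennreal (\<bar>t\<bar> powr (-\<beta>) * exp (- t\<^sup>2)) \<le> ennreal (exp (1/4)) * (h t + h (0 + (-1) * t))"
      unfolding h_def
      by (simp add: ennreal_mult[symmetric] ennreal_plus[symmetric] del: ennreal_plus)
  qed
  also have "\<dots> = ennreal (exp (1/4)) * ((\<integral>\<^sup>+t. h t \<partial>lborel) + (\<integral>\<^sup>+t. h (0 + (-1) * t) \<partial>lborel))"
    by (simp add: nn_integral_cmult nn_integral_add)
  also have "(\<integral>\<^sup>+t. h (0 + (-1) * t) \<partial>lborel) = (\<integral>\<^sup>+t. h t \<partial>lborel)"
    using nn_integral_real_affine[OF hm, of "-1" 0] by simp
  also have "ennreal (exp (1/4)) * ((\<integral>\<^sup>+t. h t \<partial>lborel) + (\<integral>\<^sup>+t. h t \<partial>lborel)) < \<infinity>"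
    using half_line_gamma_fin[OF assms] unfolding h_def
    by (simp add: ennreal_mult_less_top)
  finally show ?thesis .
qed

lemma nn_integral_prod_bound:
  fixes F :: "'a::euclidean_space \<Rightarrow> ennreal" and g :: "real \<Rightarrow> ennreal"
  assumes [measurable]: "F \<in> borel_measurable borel" "g \<in> borel_measurable borel"
    and le: "\<And>x. F x \<le> (\<Prod>b\<in>Basis. g (x \<bullet> b))"
  shows "(\<integral>\<^sup>+x. F x \<partial>lborel) \<le> (\<Prod>b\<in>(Basis::'a set). \<integral>\<^sup>+t. g t \<partial>lborel)"
proof -
  interpret product_sigma_finite "\<lambda>_::'a. lborel::real measure" by standard
  have "(\<integral>\<^sup>+x. F x \<partial>lborel) = (\<integral>\<^sup>+x. F x \<partial>distr (\<Pi>\<^sub>M b\<in>(Basis::'a set). lborel) borel (\<lambda>f. \<Sum>b\<in>Basis. f b *\<^sub>R b))"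
    by (simp only: lborel_eq[symmetric])
  also have "\<dots> = (\<integral>\<^sup>+f. F (\<Sum>b\<in>Basis. f b *\<^sub>R b) \<partial>(\<Pi>\<^sub>M b\<in>(Basis::'a set). lborel))"
    by (intro nn_integral_distr) measurable
  also have "\<dots> \<le> (\<integral>\<^sup>+f. (\<Prod>b\<in>Basis. g (f b)) \<partial>(\<Pi>\<^sub>M b\<in>(Basis::'a set). lborel))"
  proof (intro nn_integral_mono)
    fix f :: "'a \<Rightarrow> real"
    have "(\<Sum>b\<in>Basis. f b *\<^sub>R b) \<bullet> b' = f b'" if "b' \<in> Basis" for b'
      using that by (simp add: inner_sum_left inner_Basis if_distrib cong: if_cong)
    then show "F (\<Sum>b\<in>Basis. f b *\<^sub>R b) \<le> (\<Prod>b\<in>Basis. g (f b))"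
      using le[of "\<Sum>b\<in>Basis. f b *\<^sub>R b"] by (metis (no_types, lifting) prod.cong)
  qed
  also have "\<dots> = (\<Prod>b\<in>(Basis::'a set). \<integral>\<^sup>+t. g t \<partial>lborel)"
    using product_nn_integral_prod[of "Basis::'a set" "\<lambda>_. g"] by simp
  finally show ?thesis .
qed

lemma norm_sq_sum: "(norm (x::'a::euclidean_space))\<^sup>2 = (\<Sum>b\<in>Basis. (x \<bullet> b)\<^sup>2)"
  by (subst power2_norm_eq_inner, subst euclidean_inner, simp add: power2_eq_square)

lemma exp_norm_prod: "exp (- (norm (x::'a::euclidean_space))\<^sup>2) = (\<Prod>b\<in>Basis. exp (- (x \<bullet> b)\<^sup>2))"
  by (simp add: norm_sq_sum exp_sum sum_negf[symmetric])

lemma gauss1d_fin: "(\<integral>\<^sup>+t. ennreal (exp (- t\<^sup>2)) \<partial>lborel) < \<infinity>"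
proof -
  have "(\<integral>\<^sup>+t. ennreal (exp (- t\<^sup>2)) \<partial>lborel) = (\<integral>\<^sup>+t. ennreal (\<bar>t\<bar> powr (-0) * exp (- t\<^sup>2)) \<partial>lborel)"
    by (intro nn_integral_cong_AE) (use AE_lborel_singleton[of 0] in \<open>auto\<close>)
  then show ?thesis using gauss1d_powr_fin[of 0] by simp
qed

lemma J_fin: "(\<integral>\<^sup>+x. ennreal (exp (- (norm (x::'a::euclidean_space))\<^sup>2)) \<partial>lborel) < \<infinity>"
proof -
  have "(\<integral>\<^sup>+x. ennreal (exp (- (norm (x::'a))\<^sup>2)) \<partial>lborel) \<le> (\<Prod>b\<in>(Basis::'a set). \<integral>\<^sup>+t. ennreal (exp (- t\<^sup>2)) \<partial>lborel)"
    by (intro nn_integral_prod_bound) (auto simp: exp_norm_prod prod_ennreal)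
  also have "\<dots> < \<infinity>" using gauss1d_fin by (simp add: power_less_top_ennreal)
  finally show ?thesis .
qed

lemma R_fin:
  assumes "0 < \<alpha>" "\<alpha> < real DIM('a::euclidean_space)"
  shows "(\<integral>\<^sup>+x. ennreal (norm (x::'a) powr (-\<alpha>) * exp (- (norm x)\<^sup>2)) \<partial>lborel) < \<infinity>"
proof -
  define \<beta> where "\<beta> = \<alpha> / real DIM('a)"
  have \<beta>: "0 \<le> \<beta>" "\<beta> < 1" using assms by (auto simp: \<beta>_def field_simps)
  define g where "g t = (if t = 0 then top else ennreal (\<bar>t\<bar> powr (-\<beta>) * exp (- t\<^sup>2)))" for t :: real
  have gm[measurable]: "g \<in> borel_measurable borel" unfolding g_def by measurable
  have "(\<integral>\<^sup>+x. ennreal (norm (x::'a) powr (-\<alpha>) * exp (- (norm x)\<^sup>2)) \<partial>lborel) \<le> (\<Prod>b\<in>(Basis::'a set). \<integral>\<^sup>+t. g t \<partial>lborel)"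
  proof (intro nn_integral_prod_bound)
    fix x :: 'a
    show "ennreal (norm x powr (-\<alpha>) * exp (- (norm x)\<^sup>2)) \<le> (\<Prod>b\<in>Basis. g (x \<bullet> b))"
    proof (cases "\<exists>b\<in>Basis. x \<bullet> b = 0")
      case True
      then have "(\<Prod>b\<in>Basis. g (x \<bullet> b)) = top"
        by (subst ennreal_prod_eq_top) (auto simp: g_def)
      then show ?thesis by simp
    next
      case False
      then have nz: "\<And>b. b \<in> Basis \<Longrightarrow> x \<bullet> b \<noteq> 0" by auto
      obtain b0 :: 'a where "b0 \<in> Basis" using nonempty_Basis by blast
      then have "x \<noteq> 0" using nz[of b0] by auto
      then have xpos: "norm x > 0" by simp
      have "norm x powr (-\<alpha>) = (\<Prod>b\<in>(Basis::'a set). norm x powr (-\<beta>))"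
        using xpos by (simp add: prod_constant powr_power \<beta>_def)
      also have "\<dots> \<le> (\<Prod>b\<in>Basis. \<bar>x \<bullet> b\<bar> powr (-\<beta>))"
        using nz \<beta> by (intro prod_mono conjI powr_mono2' Basis_le_norm) auto
      finally have "norm x powr (-\<alpha>) * exp (- (norm x)\<^sup>2) \<le> (\<Prod>b\<in>Basis. \<bar>x \<bullet> b\<bar> powr (-\<beta>)) * (\<Prod>b\<in>Basis. exp (- (x \<bullet> b)\<^sup>2))"
        by (simp add: exp_norm_prod mult_right_mono prod_nonneg)
      also have "\<dots> = (\<Prod>b\<in>Basis. \<bar>x \<bullet> b\<bar> powr (-\<beta>) * exp (- (x \<bullet> b)\<^sup>2))"
        by (simp add: prod.distrib)
      finally show ?thesis using nz
        by (simp add: g_def prod_ennreal prod_nonneg)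
    qed
  qed measurable
  also have "(\<integral>\<^sup>+t. g t \<partial>lborel) = (\<integral>\<^sup>+t. ennreal (\<bar>t\<bar> powr (-\<beta>) * exp (- t\<^sup>2)) \<partial>lborel)"
    by (intro nn_integral_cong_AE) (use AE_lborel_singleton[of 0] in \<open>auto simp: g_def\<close>)
  also have "(\<Prod>b\<in>(Basis::'a set). \<integral>\<^sup>+t. ennreal (\<bar>t\<bar> powr (-\<beta>) * exp (- t\<^sup>2)) \<partial>lborel) < \<infinity>"
    using gauss1d_powr_fin[OF \<beta>] by (simp add: power_less_top_ennreal)
  finally show ?thesis .
qed

lemma lborel_not_AE_False: "\<not> (AE x in (lborel :: 'a::euclidean_space measure). False)"
proof
  assume "AE x in (lborel :: 'a measure). False"
  then obtain N where N: "{x \<in> space (lborel :: 'a measure). \<not> False} \<subseteq> N" "emeasure lborel N = 0" "N \<in> sets lborel"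
    by (rule AE_E)
  then have "emeasure (lborel :: 'a measure) UNIV \<le> emeasure lborel N"
    by (intro emeasure_mono) auto
  then show False using N by simp
qed

lemma nn_integral_scale:
  fixes f :: "'a::euclidean_space \<Rightarrow> ennreal"
  assumes r: "r > 0" and [measurable]: "f \<in> borel_measurable borel"
  shows "(\<integral>\<^sup>+x. f x \<partial>lborel) = ennreal (r ^ DIM('a)) * (\<integral>\<^sup>+x. f (r *\<^sub>R x) \<partial>lborel)"
  using r by (subst lborel_affine[of r 0]) (simp_all add: nn_integral_density nn_integral_distr nn_integral_cmult)

lemma nn_integral_translate:
  fixes f :: "'a::euclidean_space \<Rightarrow> ennreal"
  assumes [measurable]: "f \<in> borel_measurable borel"
  shows "(\<integral>\<^sup>+x. f (v + x) \<partial>lborel) = (\<integral>\<^sup>+x. f x \<partial>lborel)"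
proof -
  have "(\<integral>\<^sup>+x. f x \<partial>lborel) = (\<integral>\<^sup>+x. f x \<partial>distr lborel borel ((+) v))"
    by (simp only: lborel_distr_plus)
  also have "\<dots> = (\<integral>\<^sup>+x. f (v + x) \<partial>lborel)"
    by (intro nn_integral_distr) measurable
  finally show ?thesis ..
qed

definition J1 :: "'a::euclidean_space itself \<Rightarrow> real" where
  "J1 _ = enn2real (\<integral>\<^sup>+x. ennreal (exp (- (norm (x::'a))\<^sup>2)) \<partial>lborel)"

lemma J1_eq: "(\<integral>\<^sup>+x. ennreal (exp (- (norm (x::'a::euclidean_space))\<^sup>2)) \<partial>lborel) = ennreal (J1 TYPE('a))"
  using J_fin[where 'a='a] unfolding J1_def by simp

lemma J1_pos: "J1 TYPE('a::euclidean_space) > 0"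
proof -
  have "(\<integral>\<^sup>+x. ennreal (exp (- (norm (x::'a))\<^sup>2)) \<partial>lborel) \<noteq> 0"
    using lborel_not_AE_False by (subst nn_integral_0_iff_AE) auto
  then show ?thesis using J1_eq[where 'a='a] J1_def by (metis enn2real_nonneg ennreal_0 order_le_less)
qed

lemma sqrt_pow_DIM: "0 < s \<Longrightarrow> sqrt s ^ n = s powr (real n / 2)"
  by (simp add: powr_half_sqrt[symmetric] powr_power)

lemma J_scale:
  assumes s: "s > 0"
  shows "(\<integral>\<^sup>+y. ennreal (exp (- (norm (y::'a::euclidean_space))\<^sup>2 / s)) \<partial>lborel)
       = ennreal (s powr (real DIM('a) / 2) * J1 TYPE('a))"
proof -
  have "(\<integral>\<^sup>+y. ennreal (exp (- (norm (y::'a))\<^sup>2 / s)) \<partial>lborel)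
      = ennreal (sqrt s ^ DIM('a)) * (\<integral>\<^sup>+y. ennreal (exp (- (norm (sqrt s *\<^sub>R (y::'a)))\<^sup>2 / s)) \<partial>lborel)"
    using s by (intro nn_integral_scale) auto
  also have "(\<lambda>y::'a. ennreal (exp (- (norm (sqrt s *\<^sub>R y))\<^sup>2 / s))) = (\<lambda>y. ennreal (exp (- (norm y)\<^sup>2)))"
    using s by (auto simp: power_mult_distrib)
  finally show ?thesis using s
    by (simp add: J1_eq sqrt_pow_DIM ennreal_mult J1_pos less_imp_le)
qed

definition R1 :: "'a::euclidean_space itself \<Rightarrow> real \<Rightarrow> real" where
  "R1 _ \<alpha> = enn2real (\<integral>\<^sup>+x. ennreal (norm (x::'a) powr (-\<alpha>) * exp (- (norm x)\<^sup>2)) \<partial>lborel)"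

lemma R1_eq:
  assumes "0 < \<alpha>" "\<alpha> < real DIM('a::euclidean_space)"
  shows "(\<integral>\<^sup>+x. ennreal (norm (x::'a) powr (-\<alpha>) * exp (- (norm x)\<^sup>2)) \<partial>lborel) = ennreal (R1 TYPE('a) \<alpha>)"
  using R_fin[OF assms] unfolding R1_def by simp

lemma R1_pos:
  assumes "0 < \<alpha>" "\<alpha> < real DIM('a::euclidean_space)"
  shows "R1 TYPE('a) \<alpha> > 0"
proof -
  have "(\<integral>\<^sup>+x. ennreal (norm (x::'a) powr (-\<alpha>) * exp (- (norm x)\<^sup>2)) \<partial>lborel) \<noteq> 0"
  proof
    assume "(\<integral>\<^sup>+x. ennreal (norm (x::'a) powr (-\<alpha>) * exp (- (norm x)\<^sup>2)) \<partial>lborel) = 0"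
    then have "AE x in lborel. ennreal (norm (x::'a) powr (-\<alpha>) * exp (- (norm x)\<^sup>2)) = 0"
      by (subst (asm) nn_integral_0_iff_AE) auto
    then have "AE x in (lborel::'a measure). False"
      using AE_lborel_singleton[of 0] by eventually_elim auto
    then show False using lborel_not_AE_False by blast
  qed
  then show ?thesis using R1_eq[OF assms] R1_def by (metis enn2real_nonneg ennreal_0 order_le_less)
qed

lemma R_scale:
  assumes t: "t > 0" and "0 < \<alpha>" "\<alpha> < real DIM('a::euclidean_space)"
  shows "(\<integral>\<^sup>+w. ennreal (norm (w::'a) powr (-\<alpha>) * exp (- (norm w)\<^sup>2 / t)) \<partial>lborel)
       = ennreal (t powr (real DIM('a) / 2) * t powr (-\<alpha>/2) * R1 TYPE('a) \<alpha>)"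
proof -
  have "(\<integral>\<^sup>+w. ennreal (norm (w::'a) powr (-\<alpha>) * exp (- (norm w)\<^sup>2 / t)) \<partial>lborel)
      = ennreal (sqrt t ^ DIM('a)) * (\<integral>\<^sup>+w. ennreal (norm (sqrt t *\<^sub>R (w::'a)) powr (-\<alpha>) * exp (- (norm (sqrt t *\<^sub>R w))\<^sup>2 / t)) \<partial>lborel)"
    using t by (intro nn_integral_scale) auto
  also have "(\<lambda>w::'a. ennreal (norm (sqrt t *\<^sub>R w) powr (-\<alpha>) * exp (- (norm (sqrt t *\<^sub>R w))\<^sup>2 / t)))
     = (\<lambda>w. ennreal (t powr (-\<alpha>/2)) * ennreal (norm w powr (-\<alpha>) * exp (- (norm w)\<^sup>2)))"
  proof
    fix w :: 'a
    have "norm (sqrt t *\<^sub>R w) powr (-\<alpha>) = t powr (-\<alpha>/2) * norm w powr (-\<alpha>)"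
      using t by (simp add: powr_mult powr_half_sqrt[symmetric] powr_powr)
    then show "ennreal (norm (sqrt t *\<^sub>R w) powr (-\<alpha>) * exp (- (norm (sqrt t *\<^sub>R w))\<^sup>2 / t))
      = ennreal (t powr (-\<alpha>/2)) * ennreal (norm w powr (-\<alpha>) * exp (- (norm w)\<^sup>2))"
      using t by (simp add: power_mult_distrib ennreal_mult[symmetric] mult.assoc)
  qed
  also have "(\<integral>\<^sup>+w. ennreal (t powr (-\<alpha>/2)) * ennreal (norm (w::'a) powr (-\<alpha>) * exp (- (norm w)\<^sup>2)) \<partial>lborel)
     = ennreal (t powr (-\<alpha>/2)) * ennreal (R1 TYPE('a) \<alpha>)"
    by (subst nn_integral_cmult, measurable, subst R1_eq[OF assms(2,3)], rule refl)
  finally show ?thesis using t R1_pos[OF assms(2,3)]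
    by (simp add: sqrt_pow_DIM ennreal_mult[symmetric] mult_ac)
qed

lemma sq_ident:
  fixes a b Y P W :: real
  assumes "a > 0" "b > 0"
  shows "Y / a + (Y + 2 * P + W) / b
       = W / (a + b) + ((a/(a+b))\<^sup>2 * W + 2 * (a/(a+b)) * P + Y) / (a * b / (a + b))"
proof -
  have ab: "a + b > 0" using assms by simp
  have e1: "(a/(a+b))\<^sup>2 * W / (a * b / (a + b)) = a * W / (b * (a + b))"
  proof -
    have "(a/(a+b))\<^sup>2 * W / (a * b / (a + b)) = (a * a * W * (a + b)) / ((a + b) * (a + b) * (a * b))"
      by (simp add: power2_eq_square)
    also have "\<dots> = (a * W) / (b * (a + b))"
      using assms ab by (simp add: frac_eq_eq)
    finally show ?thesis .
  qed
  have e2: "2 * (a/(a+b)) * P / (a * b / (a + b)) = 2 * P / b"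
    using assms ab by simp
  have e3: "Y / (a * b / (a + b)) = Y / a + Y / b" using assms ab by (simp add: field_simps)
  have e4: "W / (a + b) + a * W / (b * (a + b)) = W / b"
  proof -
    have "W / (a + b) = b * W / (b * (a + b))" using assms by simp
    then have "W / (a + b) + a * W / (b * (a + b)) = (b * W + a * W) / (b * (a + b))"
      by (simp add: add_divide_distrib)
    also have "\<dots> = (W * (a + b)) / (b * (a + b))" by (simp add: algebra_simps)
    also have "\<dots> = W / b" using ab by simp
    finally show ?thesis .
  qed
  have "((a/(a+b))\<^sup>2 * W + 2 * (a/(a+b)) * P + Y) / (a * b / (a + b))
     = (a/(a+b))\<^sup>2 * W / (a * b / (a + b)) + 2 * (a/(a+b)) * P / (a * b / (a + b)) + Y / (a * b / (a + b))"
    by (simp only: add_divide_distrib)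
  also have "\<dots> = a * W / (b * (a + b)) + 2 * P / b + (Y / a + Y / b)" using e1 e2 e3 by simp
  finally have "W / (a + b) + ((a/(a+b))\<^sup>2 * W + 2 * (a/(a+b)) * P + Y) / (a * b / (a + b))
     = (W / (a + b) + a * W / (b * (a + b))) + 2 * P / b + Y / a + Y / b" by simp
  also have "\<dots> = W / b + 2 * P / b + Y / a + Y / b" using e4 by simp
  finally show ?thesis by (simp add: add_divide_distrib)
qed

lemma neg_eq: "(A::real) / a + B / b = C / d + E / e \<Longrightarrow> - A / a + - B / b = - C / d + - E / e"
  by (metis minus_add_distrib minus_divide_left)

lemma norm_add_sq: "(norm (x + y :: 'a::real_inner))\<^sup>2 = (norm x)\<^sup>2 + 2 * (x \<bullet> y) + (norm y)\<^sup>2"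
  by (simp add: power2_norm_eq_inner inner_add inner_commute)

lemma CK:
  fixes w :: "'a::euclidean_space"
  assumes a: "a > 0" and b: "b > 0"
  shows "(\<integral>\<^sup>+y. ennreal (exp (- (norm y)\<^sup>2 / a) * exp (- (norm (y + w))\<^sup>2 / b)) \<partial>lborel)
       = ennreal (exp (- (norm w)\<^sup>2 / (a + b)) * ((a * b / (a + b)) powr (real DIM('a) / 2) * J1 TYPE('a)))"
proof -
  define c where "c = a / (a + b)"
  define s where "s = a * b / (a + b)"
  have s: "s > 0" using a b by (simp add: s_def)
  have c0: "c > 0" using a b by (simp add: c_def)
  have pt: "exp (- (norm y)\<^sup>2 / a) * exp (- (norm (y + w))\<^sup>2 / b)
      = exp (- (norm w)\<^sup>2 / (a + b)) * exp (- (norm (c *\<^sub>R w + y))\<^sup>2 / s)" for y :: 'a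
  proof -
    have n1: "(norm (c *\<^sub>R w + y))\<^sup>2 = c\<^sup>2 * (norm w)\<^sup>2 + 2 * c * (y \<bullet> w) + (norm y)\<^sup>2"
      using c0 by (simp add: norm_add_sq power_mult_distrib inner_commute)
    have n2: "(norm (y + w))\<^sup>2 = (norm y)\<^sup>2 + 2 * (y \<bullet> w) + (norm w)\<^sup>2" by (simp add: norm_add_sq)
    have sq: "(norm y)\<^sup>2 / a + ((norm y)\<^sup>2 + 2 * (y \<bullet> w) + (norm w)\<^sup>2) / b
       = (norm w)\<^sup>2 / (a + b) + (c\<^sup>2 * (norm w)\<^sup>2 + 2 * c * (y \<bullet> w) + (norm y)\<^sup>2) / s"
      using sq_ident[OF a b, of "(norm y)\<^sup>2" "y \<bullet> w" "(norm w)\<^sup>2"] unfolding c_def s_def .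
    have "- (norm y)\<^sup>2 / a + - (norm (y + w))\<^sup>2 / b = - (norm w)\<^sup>2 / (a + b) + - (norm (c *\<^sub>R w + y))\<^sup>2 / s"
      using neg_eq[OF sq[folded n1 n2]] .
    then show ?thesis by (simp only: exp_add[symmetric])
  qed
  have "(\<integral>\<^sup>+y. ennreal (exp (- (norm y)\<^sup>2 / a) * exp (- (norm (y + w))\<^sup>2 / b)) \<partial>lborel)
      = (\<integral>\<^sup>+y. ennreal (exp (- (norm w)\<^sup>2 / (a + b))) * ennreal (exp (- (norm (c *\<^sub>R w + y))\<^sup>2 / s)) \<partial>lborel)"
    by (intro nn_integral_cong) (subst pt, rule ennreal_mult; simp)
  also have "\<dots> = ennreal (exp (- (norm w)\<^sup>2 / (a + b))) * (\<integral>\<^sup>+y. ennreal (exp (- (norm (c *\<^sub>R w + y))\<^sup>2 / s)) \<partial>lborel)"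
    by (rule nn_integral_cmult) measurable
  also have "(\<integral>\<^sup>+y. ennreal (exp (- (norm (c *\<^sub>R w + y))\<^sup>2 / s)) \<partial>lborel)
      = (\<integral>\<^sup>+y. ennreal (exp (- (norm (y::'a))\<^sup>2 / s)) \<partial>lborel)"
    by (rule nn_integral_translate[where f="\<lambda>y. ennreal (exp (- (norm y)\<^sup>2 / s))"]) measurable
  also have "\<dots> = ennreal (s powr (real DIM('a) / 2) * J1 TYPE('a))"
    by (rule J_scale[OF s])
  finally show ?thesis using J1_pos[where 'a='a] s
    by (simp add: s_def ennreal_mult[symmetric])
qed

lemma riesz_const_pos:
  assumes "0 < \<alpha>" "\<alpha> < real d"
  shows "riesz_const d \<alpha> > 0"
  using assms unfolding riesz_const_def by (intro divide_pos_pos mult_pos_pos Gamma_real_pos) auto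

lemma powr_combine:
  fixes a b D \<alpha> :: real
  assumes "a > 0" "b > 0"
  shows "(a * b / (a + b)) powr (D / 2) * ((a + b) powr (D / 2) * (a + b) powr (- \<alpha> / 2))
       = (a * b) powr (D / 2) * (a + b) powr (- \<alpha> / 2)"
  using assms by (simp add: powr_divide)

lemma riesz_KL:
  assumes al: "0 < \<alpha>" "\<alpha> < real DIM('a::euclidean_space)" and a: "a > 0" and b: "b > 0"
  shows "(\<integral>\<^sup>+p. ennreal (exp (- (norm (fst p))\<^sup>2 / a) * exp (- (norm (snd p))\<^sup>2 / b)) \<partial>(riesz_cov \<alpha> :: ('a \<times> 'a) measure))
     = ennreal (riesz_const DIM('a) \<alpha> * J1 TYPE('a) * R1 TYPE('a) \<alpha> * ((a * b) powr (real DIM('a) / 2) * (a + b) powr (- \<alpha> / 2)))"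
proof -
  define c where "c = riesz_const DIM('a) \<alpha>"
  have c: "c > 0" using riesz_const_pos[OF al] by (simp add: c_def)
  define s where "s = a * b / (a + b)"
  have s: "s > 0" using a b by (simp add: s_def)
  let ?g = "\<lambda>p::'a\<times>'a. ennreal (exp (- (norm (fst p))\<^sup>2 / a) * exp (- (norm (snd p))\<^sup>2 / b))"
  have "(\<integral>\<^sup>+p. ?g p \<partial>(riesz_cov \<alpha> :: ('a \<times> 'a) measure))
      = (\<integral>\<^sup>+p. (case p of (y, z) \<Rightarrow> ennreal (c * norm (z - y) powr (- \<alpha>))) * ?g p \<partial>(lborel \<Otimes>\<^sub>M lborel))"
    unfolding riesz_cov_def c_def by (rule nn_integral_density) measurable
  also have "\<dots> = (\<integral>\<^sup>+y. \<integral>\<^sup>+z. ennreal (c * norm (z - y) powr (- \<alpha>)) * ?g (y, z) \<partial>lborel \<partial>lborel)"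
  proof -
    define F where "F = (\<lambda>p::'a\<times>'a. (case p of (y, z) \<Rightarrow> ennreal (c * norm (z - y) powr (- \<alpha>))) * ?g p)"
    have Fm: "F \<in> borel_measurable (lborel \<Otimes>\<^sub>M lborel)" unfolding F_def by measurable
    show ?thesis using lborel.nn_integral_fst[OF Fm] by (simp add: F_def)
  qed
  also have "\<dots> = (\<integral>\<^sup>+y. \<integral>\<^sup>+w. ennreal (c * norm w powr (- \<alpha>)) * ennreal (exp (- (norm y)\<^sup>2 / a) * exp (- (norm ((y::'a) + w))\<^sup>2 / b)) \<partial>lborel \<partial>lborel)"
  proof (rule nn_integral_cong)
    fix y :: 'a
    show "(\<integral>\<^sup>+z. ennreal (c * norm (z - y) powr (- \<alpha>)) * ?g (y, z) \<partial>lborel)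
      = (\<integral>\<^sup>+w. ennreal (c * norm w powr (- \<alpha>)) * ennreal (exp (- (norm y)\<^sup>2 / a) * exp (- (norm (y + w))\<^sup>2 / b)) \<partial>lborel)"
      using nn_integral_translate[of "\<lambda>z. ennreal (c * norm (z - y) powr (- \<alpha>)) * ?g (y, z)" y, symmetric]
      by (simp add: add.commute)
  qed
  also have "\<dots> = (\<integral>\<^sup>+w. \<integral>\<^sup>+y. ennreal (c * norm w powr (- \<alpha>)) * ennreal (exp (- (norm y)\<^sup>2 / a) * exp (- (norm ((y::'a) + w))\<^sup>2 / b)) \<partial>lborel \<partial>lborel)"
    by (rule lborel_pair.Fubini'[symmetric]) measurable
  also have "\<dots> = (\<integral>\<^sup>+w. ennreal (c * norm (w::'a) powr (- \<alpha>)) * ennreal (exp (- (norm w)\<^sup>2 / (a + b)) * (s powr (real DIM('a) / 2) * J1 TYPE('a))) \<partial>lborel)"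
  proof (rule nn_integral_cong)
    fix w :: 'a
    show "(\<integral>\<^sup>+y. ennreal (c * norm w powr (- \<alpha>)) * ennreal (exp (- (norm y)\<^sup>2 / a) * exp (- (norm (y + w))\<^sup>2 / b)) \<partial>lborel)
       = ennreal (c * norm w powr (- \<alpha>)) * ennreal (exp (- (norm w)\<^sup>2 / (a + b)) * (s powr (real DIM('a) / 2) * J1 TYPE('a)))"
      by (subst nn_integral_cmult, measurable, subst CK[OF a b], simp add: s_def)
  qed
  also have "\<dots> = (\<integral>\<^sup>+w. ennreal (c * s powr (real DIM('a) / 2) * J1 TYPE('a)) * ennreal (norm (w::'a) powr (- \<alpha>) * exp (- (norm w)\<^sup>2 / (a + b))) \<partial>lborel)"
    using c J1_pos[where 'a='a] s
    by (intro nn_integral_cong) (simp add: ennreal_mult[symmetric] mult_ac)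
  also have "\<dots> = ennreal (c * s powr (real DIM('a) / 2) * J1 TYPE('a)) * ennreal ((a + b) powr (real DIM('a) / 2) * (a + b) powr (- \<alpha> / 2) * R1 TYPE('a) \<alpha>)"
    using a b by (subst nn_integral_cmult, measurable, subst R_scale[OF _ al], simp_all)
  also have "\<dots> = ennreal (c * J1 TYPE('a) * R1 TYPE('a) \<alpha> * (s powr (real DIM('a) / 2) * ((a + b) powr (real DIM('a) / 2) * (a + b) powr (- \<alpha> / 2))))"
    using c J1_pos[where 'a='a] R1_pos[OF al] s by (simp add: ennreal_mult[symmetric] mult_ac)
  also have "\<dots> = ennreal (c * J1 TYPE('a) * R1 TYPE('a) \<alpha> * ((a * b) powr (real DIM('a) / 2) * (a + b) powr (- \<alpha> / 2)))"
    by (simp only: s_def powr_combine[OF a b])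
  finally show ?thesis by (simp add: c_def)
qed

lemma white_KL:
  assumes d: "DIM('a::euclidean_space) = 1" and a: "a > 0" and b: "b > 0"
  shows "(\<integral>\<^sup>+p. ennreal (exp (- (norm (fst p))\<^sup>2 / a) * exp (- (norm (snd p))\<^sup>2 / b)) \<partial>(white_cov :: ('a \<times> 'a) measure))
     = ennreal (J1 TYPE('a) * ((a * b) powr (real DIM('a) / 2) * (a + b) powr (- 1 / 2)))"
proof -
  have "(\<integral>\<^sup>+p. ennreal (exp (- (norm (fst p))\<^sup>2 / a) * exp (- (norm (snd p))\<^sup>2 / b)) \<partial>(white_cov :: ('a \<times> 'a) measure))
      = (\<integral>\<^sup>+z. ennreal (exp (- (norm (z::'a))\<^sup>2 / a) * exp (- (norm (z + 0))\<^sup>2 / b)) \<partial>lborel)"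
    unfolding white_cov_def
  proof (subst nn_integral_distr)
    show "(\<lambda>z::'a. (z, z)) \<in> lborel \<rightarrow>\<^sub>M lborel \<Otimes>\<^sub>M lborel" by measurable
    show "(\<lambda>p::'a\<times>'a. ennreal (exp (- (norm (fst p))\<^sup>2 / a) * exp (- (norm (snd p))\<^sup>2 / b)))
      \<in> borel_measurable (distr lborel (lborel \<Otimes>\<^sub>M lborel) (\<lambda>z. (z, z)))"
      by (subst measurable_cong_sets[OF sets_distr refl]) measurable
  qed simp
  also have "\<dots> = ennreal ((a * b / (a + b)) powr (real DIM('a) / 2) * J1 TYPE('a))"
    using CK[OF a b, of "0::'a"] by simp
  also have "(a * b / (a + b)) powr (real DIM('a) / 2) = (a * b) powr (real DIM('a) / 2) * (a + b) powr (- 1 / 2)"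
    using a b d by (simp add: powr_divide powr_minus_divide)
  finally show ?thesis by (simp add: mult_ac)
qed

lemma KL:
  assumes "noise_cov \<alpha> (\<Lambda> :: ('a::euclidean_space \<times> 'a) measure)"
  shows "\<exists>c>0. \<forall>a b. 0 < a \<longrightarrow> 0 < b \<longrightarrow>
     (\<integral>\<^sup>+p. ennreal (exp (- (norm (fst p))\<^sup>2 / a) * exp (- (norm (snd p))\<^sup>2 / b)) \<partial>\<Lambda>)
       = ennreal (c * ((a * b) powr (real DIM('a) / 2) * (a + b) powr (- \<alpha> / 2)))"
  using assms unfolding noise_cov_def
proof (elim disjE conjE)
  assume al: "0 < \<alpha>" "\<alpha> < min (real DIM('a)) 2" and L: "\<Lambda> = riesz_cov \<alpha>"
  have al': "\<alpha> < real DIM('a)" using al by simp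
  show ?thesis
    by (rule exI[of _ "riesz_const DIM('a) \<alpha> * J1 TYPE('a) * R1 TYPE('a) \<alpha>"])
       (use riesz_const_pos[OF al(1) al'] J1_pos[where 'a='a] R1_pos[OF al(1) al'] riesz_KL[OF al(1) al'] L in \<open>auto\<close>)
next
  assume d: "DIM('a) = 1" and al: "\<alpha> = 1" and L: "\<Lambda> = white_cov"
  show ?thesis
    by (rule exI[of _ "J1 TYPE('a)"]) (use J1_pos[where 'a='a] white_KL[OF d] L al in \<open>auto\<close>)
qed

lemma sets_noise:
  assumes "noise_cov \<alpha> (\<Lambda> :: ('a::euclidean_space \<times> 'a) measure)"
  shows "sets \<Lambda> = sets (borel \<Otimes>\<^sub>M borel)"
proof -
  have e: "sets (lborel \<Otimes>\<^sub>M lborel :: ('a \<times> 'a) measure) = sets (borel \<Otimes>\<^sub>M borel)"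
    by (rule sets_pair_measure_cong) simp_all
  show ?thesis using assms e unfolding noise_cov_def riesz_cov_def white_cov_def by auto
qed

lemma sigma_finite_noise:
  assumes "noise_cov \<alpha> (\<Lambda> :: ('a::euclidean_space \<times> 'a) measure)"
  shows "sigma_finite_measure \<Lambda>"
  using assms unfolding noise_cov_def
proof (elim disjE conjE)
  assume L: "\<Lambda> = riesz_cov \<alpha>"
  show ?thesis unfolding L riesz_cov_def
    by (subst sigma_finite_measure.sigma_finite_iff_density_finite[OF sigma_finite_pair_measure[OF sigma_finite_lborel sigma_finite_lborel]]) auto
next
  assume L: "\<Lambda> = white_cov"
  show ?thesis unfolding L
  proof
    let ?A = "range (\<lambda>n::nat. cball (0::'a) (real n) \<times> cball (0::'a) (real n))"
    show "\<exists>A. countable A \<and> A \<subseteq> sets (white_cov :: ('a \<times> 'a) measure) \<and> \<Union> A = space white_cov \<and> (\<forall>a\<in>A. emeasure white_cov a \<noteq> \<infinity>)"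
    proof (intro exI[of _ ?A] conjI ballI)
      show "countable ?A" by simp
      show "?A \<subseteq> sets white_cov" unfolding white_cov_def by auto
      show "\<Union> ?A = space white_cov"
      proof -
        have "\<Union> ?A = UNIV"
        proof (auto simp: mem_Times_iff)
          fix x y :: 'a
          obtain n :: nat where "n \<ge> max (norm x) (norm y)" using real_arch_simple by blast
          then show "\<exists>n. norm x \<le> real n \<and> norm y \<le> real n" by auto
        qed
        then show ?thesis unfolding white_cov_def by (simp add: space_pair_measure)
      qed
      fix X assume "X \<in> ?A"
      then obtain n where X: "X = cball (0::'a) (real n) \<times> cball 0 (real n)" by auto
      have "emeasure white_cov X = emeasure lborel ((\<lambda>z. (z, z)) -` X \<inter> space lborel)"
        unfolding white_cov_def X by (subst emeasure_distr) (auto)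
      also have "(\<lambda>z::'a. (z, z)) -` X \<inter> space lborel = cball 0 (real n)" unfolding X by auto
      finally show "emeasure white_cov X \<noteq> \<infinity>"
        using emeasure_bounded_finite[of "cball (0::'a) (real n)"] by simp
    qed
  qed
qed

lemma heatG_meas[measurable]:
  assumes [measurable]: "f \<in> M \<rightarrow>\<^sub>M borel" "g \<in> borel_measurable M"
  shows "(\<lambda>x. heatG \<kappa> lam (f x :: 'a::euclidean_space) (g x)) \<in> borel_measurable M"
  unfolding heatG_def by measurable

lemma heatG_nonneg: "heatG \<kappa> lam y t \<ge> 0"
  unfolding heatG_def by simp

lemma heatG_split:
  assumes "t > 0"
  shows "heatG \<kappa> lam (y::'a::euclidean_space) t
     = (2 * pi * \<kappa> * t) powr (- real DIM('a) / 2) * exp (- lam * t) * exp (- (norm y)\<^sup>2 / (2 * \<kappa> * t))"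
  using assms unfolding heatG_def by (simp add: exp_diff exp_minus field_simps)

lemma powr_alg:
  fixes u v d e :: real
  assumes "u > 0" "v > 0"
  shows "(pi * u) powr (- d / 2) * (pi * v) powr (- d / 2) * (u * v) powr (d / 2) = pi powr (- d)"
proof -
  have "(pi * u) powr (- d / 2) * (pi * v) powr (- d / 2) * (u * v) powr (d / 2)
      = (pi powr (- d / 2) * pi powr (- d / 2)) * (u powr (- d / 2) * u powr (d / 2)) * (v powr (- d / 2) * v powr (d / 2))"
    using assms by (simp add: powr_mult mult_ac)
  also have "\<dots> = pi powr (- d)"
    using assms by (simp add: powr_add[symmetric])
  finally show ?thesis .
qed

lemma heat_prod_int:
  assumes N: "noise_cov \<alpha> (\<Lambda> :: ('a::euclidean_space \<times> 'a) measure)" and k: "\<kappa> > 0"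
  shows "\<exists>K>0. \<forall>s t. 0 < s \<longrightarrow> 0 < t \<longrightarrow>
     (\<integral>\<^sup>+p. ennreal (heatG \<kappa> lam (fst p) s * heatG \<kappa> lam (snd p) t) \<partial>\<Lambda>)
       = ennreal (K * (exp (- lam * (s + t)) * (s + t) powr (- \<alpha> / 2)))"
proof -
  obtain c where c: "c > 0" and cK: "\<And>a b. 0 < a \<Longrightarrow> 0 < b \<Longrightarrow>
     (\<integral>\<^sup>+p. ennreal (exp (- (norm (fst p))\<^sup>2 / a) * exp (- (norm (snd p))\<^sup>2 / b)) \<partial>\<Lambda>)
       = ennreal (c * ((a * b) powr (real DIM('a) / 2) * (a + b) powr (- \<alpha> / 2)))"
    using KL[OF N] by blast
  have sets: "sets \<Lambda> = sets (borel \<Otimes>\<^sub>M borel)" by (rule sets_noise[OF N])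
  define d where "d = real DIM('a)"
  define K where "K = c * pi powr (- d) * (2 * \<kappa>) powr (- \<alpha> / 2)"
  show ?thesis
  proof (intro exI[of _ K] conjI allI impI)
    show "K > 0" using c k by (simp add: K_def)
    fix s t :: real assume s: "0 < s" and t: "0 < t"
    define C where "C = (2 * pi * \<kappa> * s) powr (- d / 2) * exp (- lam * s) * ((2 * pi * \<kappa> * t) powr (- d / 2) * exp (- lam * t))"
    have C: "C \<ge> 0" by (simp add: C_def)
    have "(\<integral>\<^sup>+p. ennreal (heatG \<kappa> lam (fst p) s * heatG \<kappa> lam (snd p) t) \<partial>\<Lambda>)
        = (\<integral>\<^sup>+p. ennreal C * ennreal (exp (- (norm (fst p))\<^sup>2 / (2 * \<kappa> * s)) * exp (- (norm (snd p))\<^sup>2 / (2 * \<kappa> * t))) \<partial>\<Lambda>)"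
      using s t C by (intro nn_integral_cong)
        (simp add: heatG_split C_def d_def ennreal_mult[symmetric] mult_ac)
    also have "\<dots> = ennreal C * (\<integral>\<^sup>+p. ennreal (exp (- (norm (fst p))\<^sup>2 / (2 * \<kappa> * s)) * exp (- (norm (snd p))\<^sup>2 / (2 * \<kappa> * t))) \<partial>\<Lambda>)"
      by (rule nn_integral_cmult) (simp add: measurable_cong_sets[OF sets refl])
    also have "\<dots> = ennreal C * ennreal (c * (((2 * \<kappa> * s) * (2 * \<kappa> * t)) powr (d / 2) * ((2 * \<kappa> * s) + (2 * \<kappa> * t)) powr (- \<alpha> / 2)))"
    proof -
      have p1: "0 < 2 * \<kappa> * s" and p2: "0 < 2 * \<kappa> * t" using s t k by simp_all
      show ?thesis unfolding d_def by (simp only: cK[OF p1 p2])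
    qed
    also have "\<dots> = ennreal (K * (exp (- lam * (s + t)) * (s + t) powr (- \<alpha> / 2)))"
    proof -
      have e1: "(2 * \<kappa> * s) + (2 * \<kappa> * t) = (2 * \<kappa>) * (s + t)" by (simp add: algebra_simps)
      have e2: "(2 * pi * \<kappa> * s) powr (- d / 2) * (2 * pi * \<kappa> * t) powr (- d / 2) * ((2 * \<kappa> * s) * (2 * \<kappa> * t)) powr (d / 2) = pi powr (- d)"
        using powr_alg[of "2 * \<kappa> * s" "2 * \<kappa> * t" d] s t k by (simp add: mult_ac)
      have e3: "exp (- lam * s) * exp (- lam * t) = exp (- lam * (s + t))" by (simp add: exp_add[symmetric] algebra_simps)
      have "C * (c * (((2 * \<kappa> * s) * (2 * \<kappa> * t)) powr (d / 2) * ((2 * \<kappa> * s) + (2 * \<kappa> * t)) powr (- \<alpha> / 2)))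
         = c * ((2 * pi * \<kappa> * s) powr (- d / 2) * (2 * pi * \<kappa> * t) powr (- d / 2) * ((2 * \<kappa> * s) * (2 * \<kappa> * t)) powr (d / 2))
             * (exp (- lam * s) * exp (- lam * t)) * ((2 * \<kappa>) powr (- \<alpha> / 2) * (s + t) powr (- \<alpha> / 2))"
      proof -
        have e5: "((2 * \<kappa> * s) + (2 * \<kappa> * t)) powr (- \<alpha> / 2) = (2 * \<kappa>) powr (- \<alpha> / 2) * (s + t) powr (- \<alpha> / 2)"
          unfolding e1 by (rule powr_mult)
        show ?thesis unfolding C_def e5 by (simp only: mult_ac)
      qed
      also have "\<dots> = K * (exp (- lam * (s + t)) * (s + t) powr (- \<alpha> / 2))"
        unfolding e2 e3 K_def by (simp add: mult_ac)
      finally show ?thesis using C c s t k by (simp add: ennreal_mult[symmetric])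
    qed
    finally show "(\<integral>\<^sup>+p. ennreal (heatG \<kappa> lam (fst p) s * heatG \<kappa> lam (snd p) t) \<partial>\<Lambda>)
       = ennreal (K * (exp (- lam * (s + t)) * (s + t) powr (- \<alpha> / 2)))" .
  qed
qed

definition Phi :: "real \<Rightarrow> real \<Rightarrow> real \<Rightarrow> real" where
  "Phi lam \<alpha> u = (if u > 0 then exp (- lam * u) * u powr (- \<alpha> / 2) else 0)"

lemma Phi_meas[measurable]: "Phi lam \<alpha> \<in> borel_measurable borel"
  unfolding Phi_def by measurable

lemma Phi_nonneg: "Phi lam \<alpha> u \<ge> 0" by (simp add: Phi_def)

lemma Phi_nn_fin:
  assumes lam: "lam > 0" and al: "0 < \<alpha>" "\<alpha> < 2"
  shows "(\<integral>\<^sup>+u. ennreal (Phi lam \<alpha> u) \<partial>lborel) < \<infinity>"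
proof -
  have "(\<integral>\<^sup>+u. ennreal (Phi lam \<alpha> u) \<partial>lborel) = ennreal \<bar>1/lam\<bar> * (\<integral>\<^sup>+x. ennreal (Phi lam \<alpha> (0 + (1/lam) * x)) \<partial>lborel)"
    using lam by (intro nn_integral_real_affine) auto
  also have "(\<lambda>x. ennreal (Phi lam \<alpha> (0 + (1/lam) * x))) = (\<lambda>x. ennreal (lam powr (\<alpha>/2)) * ennreal (indicator {0..} x * (x powr (-(\<alpha>/2)) * exp (- x))))"
  proof
    fix x :: real
    show "ennreal (Phi lam \<alpha> (0 + (1/lam) * x)) = ennreal (lam powr (\<alpha>/2)) * ennreal (indicator {0..} x * (x powr (-(\<alpha>/2)) * exp (- x)))"
    proof (cases "x > 0")
      case True
      then have "Phi lam \<alpha> (0 + (1/lam) * x) = lam powr (\<alpha>/2) * (x powr (-(\<alpha>/2)) * exp (- x))"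
        using lam by (simp add: Phi_def powr_divide powr_minus_divide field_simps)
      then show ?thesis using True lam by (simp add: ennreal_mult[symmetric])
    next
      case False
      then show ?thesis using lam by (cases "x = 0") (auto simp: Phi_def indicator_def mult_le_0_iff zero_less_divide_iff)
    qed
  qed
  also have "(\<integral>\<^sup>+x. ennreal (lam powr (\<alpha>/2)) * ennreal (indicator {0..} x * (x powr (-(\<alpha>/2)) * exp (- x))) \<partial>lborel)
     = ennreal (lam powr (\<alpha>/2)) * (\<integral>\<^sup>+x. ennreal (indicator {0..} x * (x powr (-(\<alpha>/2)) * exp (- x))) \<partial>lborel)"
    by (rule nn_integral_cmult) measurable
  finally show ?thesis using half_line_gamma_fin[of "\<alpha>/2"] al
    by (simp add: ennreal_mult_less_top)
qed

lemma Phi_integrable: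
  assumes "lam > 0" "0 < \<alpha>" "\<alpha> < 2"
  shows "integrable lborel (Phi lam \<alpha>)"
  apply (rule integrableI_nonneg)
    apply measurable
   apply (simp add: Phi_nonneg)
  apply (rule Phi_nn_fin[OF assms])
  done

definition Pf :: "real \<Rightarrow> real \<Rightarrow> real \<Rightarrow> real \<Rightarrow> real" where
  "Pf lam \<alpha> u v = (if 0 < u \<and> 0 < v then Phi lam \<alpha> (u + v) else 0)"

lemma pair_bochner:
  assumes sets: "sets \<Lambda> = sets (borel \<Otimes>\<^sub>M borel)"
    and HK: "\<forall>s t. 0 < s \<longrightarrow> 0 < t \<longrightarrow>
     (\<integral>\<^sup>+p. ennreal (heatG \<kappa> lam (fst p) s * heatG \<kappa> lam (snd p) t) \<partial>\<Lambda>)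
       = ennreal (K * (exp (- lam * (s + t)) * (s + t) powr (- \<alpha> / 2)))"
    and K: "K > 0"
  shows "has_bochner_integral \<Lambda> (\<lambda>p. heatG \<kappa> lam (fst p :: 'a::euclidean_space) u * heatG \<kappa> lam (snd p) v) (K * Pf lam \<alpha> u v)"
proof (cases "0 < u \<and> 0 < v")
  case True
  show ?thesis
  proof (rule has_bochner_integral_nn_integral)
    show "(\<lambda>p. heatG \<kappa> lam (fst p :: 'a) u * heatG \<kappa> lam (snd p) v) \<in> borel_measurable \<Lambda>"
      by (simp add: measurable_cong_sets[OF sets refl])
    show "AE x in \<Lambda>. 0 \<le> heatG \<kappa> lam (fst x) u * heatG \<kappa> lam (snd x) v"
      by (simp add: heatG_nonneg)
    show "0 \<le> K * Pf lam \<alpha> u v" using K by (simp add: Pf_def Phi_nonneg)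
    show "(\<integral>\<^sup>+p. ennreal (heatG \<kappa> lam (fst p :: 'a) u * heatG \<kappa> lam (snd p) v) \<partial>\<Lambda>) = ennreal (K * Pf lam \<alpha> u v)"
      using HK True by (simp add: Pf_def Phi_def)
  qed
next
  case False
  have e: "(\<lambda>p. heatG \<kappa> lam (fst p :: 'a) u * heatG \<kappa> lam (snd p) v) = (\<lambda>p. 0)"
    using False by (auto simp: heatG_def)
  have "K * Pf lam \<alpha> u v = 0" using False by (auto simp: Pf_def)
  then show ?thesis unfolding e by (simp only:) (rule has_bochner_integral_zero)
qed

lemma inner_eq:
  assumes sets: "sets \<Lambda> = sets (borel \<Otimes>\<^sub>M borel)"
    and HK: "\<forall>s t. 0 < s \<longrightarrow> 0 < t \<longrightarrow>
     (\<integral>\<^sup>+p. ennreal (heatG \<kappa> lam (fst p) s * heatG \<kappa> lam (snd p) t) \<partial>\<Lambda>)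
       = ennreal (K * (exp (- lam * (s + t)) * (s + t) powr (- \<alpha> / 2)))"
    and K: "K > 0"
  shows "(LINT p|\<Lambda>. dG \<kappa> lam \<Delta> (fst p :: 'a::euclidean_space) s * dG \<kappa> lam \<Delta> (snd p) s)
    = K * (Pf lam \<alpha> s s - Pf lam \<alpha> s (s - \<Delta>) - Pf lam \<alpha> (s - \<Delta>) s + Pf lam \<alpha> (s - \<Delta>) (s - \<Delta>))"
proof -
  note B = pair_bochner[OF sets HK K]
  have h1: "has_bochner_integral \<Lambda> (\<lambda>p. heatG \<kappa> lam (fst p :: 'a) s * heatG \<kappa> lam (snd p) s
      - heatG \<kappa> lam (fst p) s * heatG \<kappa> lam (snd p) (s - \<Delta>)
      - heatG \<kappa> lam (fst p) (s - \<Delta>) * heatG \<kappa> lam (snd p) s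
      + heatG \<kappa> lam (fst p) (s - \<Delta>) * heatG \<kappa> lam (snd p) (s - \<Delta>))
    (K * Pf lam \<alpha> s s - K * Pf lam \<alpha> s (s - \<Delta>) - K * Pf lam \<alpha> (s - \<Delta>) s + K * Pf lam \<alpha> (s - \<Delta>) (s - \<Delta>))"
    by (intro has_bochner_integral_add has_bochner_integral_diff B)
  have e1: "(\<lambda>p. dG \<kappa> lam \<Delta> (fst p :: 'a) s * dG \<kappa> lam \<Delta> (snd p) s) = (\<lambda>p. heatG \<kappa> lam (fst p :: 'a) s * heatG \<kappa> lam (snd p) s
      - heatG \<kappa> lam (fst p) s * heatG \<kappa> lam (snd p) (s - \<Delta>)
      - heatG \<kappa> lam (fst p) (s - \<Delta>) * heatG \<kappa> lam (snd p) s
      + heatG \<kappa> lam (fst p) (s - \<Delta>) * heatG \<kappa> lam (snd p) (s - \<Delta>))"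
    by (simp add: dG_def algebra_simps)
  have H: "has_bochner_integral \<Lambda> (\<lambda>p. dG \<kappa> lam \<Delta> (fst p :: 'a) s * dG \<kappa> lam \<Delta> (snd p) s)
    (K * Pf lam \<alpha> s s - K * Pf lam \<alpha> s (s - \<Delta>) - K * Pf lam \<alpha> (s - \<Delta>) s + K * Pf lam \<alpha> (s - \<Delta>) (s - \<Delta>))"
    unfolding e1 by (rule h1)
  show ?thesis using has_bochner_integral_integral_eq[OF H] by (simp add: algebra_simps)
qed

definition Psi :: "real \<Rightarrow> real \<Rightarrow> real \<Rightarrow> real \<Rightarrow> real" where
  "Psi lam \<alpha> \<Delta> u = indicator {\<Delta><..} u * Phi lam \<alpha> u"

lemma Psi_integrable:
  assumes "lam > 0" "0 < \<alpha>" "\<alpha> < 2"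
  shows "integrable lborel (Psi lam \<alpha> \<Delta>)"
  using integrable_mult_indicator[OF _ Phi_integrable[OF assms], of "{\<Delta><..}"]
  unfolding Psi_def by simp

lemma f_pointwise:
  assumes D: "\<Delta> > 0"
  shows "indicator {0<..} s * (Pf lam \<alpha> s s - Pf lam \<alpha> s (s - \<Delta>) - Pf lam \<alpha> (s - \<Delta>) s + Pf lam \<alpha> (s - \<Delta>) (s - \<Delta>))
    = Phi lam \<alpha> (0 + 2 * s) - 2 * Psi lam \<alpha> \<Delta> (- \<Delta> + 2 * s) + Phi lam \<alpha> (- 2 * \<Delta> + 2 * s)"
proof (cases "s > 0")
  case True
  have a1: "s + s = 0 + 2 * s" "s + (s - \<Delta>) = - \<Delta> + 2 * s" "s - \<Delta> + s = - \<Delta> + 2 * s"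
    "s - \<Delta> + (s - \<Delta>) = - 2 * \<Delta> + 2 * s" by simp_all
  show ?thesis
  proof (cases "s > \<Delta>")
    case True2: True
    then show ?thesis using True D unfolding Pf_def Psi_def
      by (simp add: a1 indicator_def)
  next
    case False
    then have "\<not> (- 2 * \<Delta> + 2 * s > 0)" by simp
    then show ?thesis using True False D unfolding Pf_def Psi_def
      by (simp add: a1 indicator_def Phi_def)
  qed
next
  case False
  then show ?thesis using D unfolding Pf_def Psi_def by (simp add: indicator_def Phi_def)
qed

lemma tau2_eq:
  assumes sets: "sets \<Lambda> = sets (borel \<Otimes>\<^sub>M borel)"
    and HK: "\<forall>s t. 0 < s \<longrightarrow> 0 < t \<longrightarrow>
     (\<integral>\<^sup>+p. ennreal (heatG \<kappa> lam (fst p) s * heatG \<kappa> lam (snd p) t) \<partial>\<Lambda>)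
       = ennreal (K * (exp (- lam * (s + t)) * (s + t) powr (- \<alpha> / 2)))"
    and K: "K > 0" and lam: "lam > 0" and al: "0 < \<alpha>" "\<alpha> < 2" and D: "\<Delta> > 0"
  shows "tau2 \<kappa> lam (\<Lambda> :: ('a::euclidean_space \<times> 'a) measure) \<Delta> = K * (\<integral>u. indicator {..\<Delta>} u * Phi lam \<alpha> u \<partial>lborel)"
proof -
  have IP: "integrable lborel (Phi lam \<alpha>)" by (rule Phi_integrable[OF lam al])
  have IS: "integrable lborel (Psi lam \<alpha> \<Delta>)" by (rule Psi_integrable[OF lam al])
  have I1: "integrable lborel (\<lambda>s. Phi lam \<alpha> (0 + 2 * s))"
    using lborel_integrable_real_affine[OF IP, of 2 0] by simp
  have I2: "integrable lborel (\<lambda>s. Psi lam \<alpha> \<Delta> (- \<Delta> + 2 * s))"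
    using lborel_integrable_real_affine[OF IS, of 2 "- \<Delta>"] by simp
  have I3: "integrable lborel (\<lambda>s. Phi lam \<alpha> (- 2 * \<Delta> + 2 * s))"
    using lborel_integrable_real_affine[OF IP, of 2 "- 2 * \<Delta>"] by simp
  have J1: "(\<integral>s. Phi lam \<alpha> (0 + 2 * s) \<partial>lborel) = (\<integral>u. Phi lam \<alpha> u \<partial>lborel) / 2"
    using lborel_integral_real_affine[of 2 "Phi lam \<alpha>" 0] by simp
  have J2: "(\<integral>s. Psi lam \<alpha> \<Delta> (- \<Delta> + 2 * s) \<partial>lborel) = (\<integral>u. Psi lam \<alpha> \<Delta> u \<partial>lborel) / 2"
    using lborel_integral_real_affine[of 2 "Psi lam \<alpha> \<Delta>" "- \<Delta>"] by simp
  have J3: "(\<integral>s. Phi lam \<alpha> (- 2 * \<Delta> + 2 * s) \<partial>lborel) = (\<integral>u. Phi lam \<alpha> u \<partial>lborel) / 2"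
    using lborel_integral_real_affine[of 2 "Phi lam \<alpha>" "- 2 * \<Delta>"] by simp
  have "tau2 \<kappa> lam \<Lambda> \<Delta> = (\<integral>s. indicator {0<..} s *\<^sub>R (LINT p|\<Lambda>. dG \<kappa> lam \<Delta> (fst p) s * dG \<kappa> lam \<Delta> (snd p) s) \<partial>lborel)"
    unfolding tau2_def set_lebesgue_integral_def ..
  also have "\<dots> = (\<integral>s. K * (Phi lam \<alpha> (0 + 2 * s) - 2 * Psi lam \<alpha> \<Delta> (- \<Delta> + 2 * s) + Phi lam \<alpha> (- 2 * \<Delta> + 2 * s)) \<partial>lborel)"
  proof (rule Bochner_Integration.integral_cong[OF refl])
    fix s :: real
    show "indicator {0<..} s *\<^sub>R (LINT p|\<Lambda>. dG \<kappa> lam \<Delta> (fst p) s * dG \<kappa> lam \<Delta> (snd p) s)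
      = K * (Phi lam \<alpha> (0 + 2 * s) - 2 * Psi lam \<alpha> \<Delta> (- \<Delta> + 2 * s) + Phi lam \<alpha> (- 2 * \<Delta> + 2 * s))"
      unfolding inner_eq[OF sets HK K] f_pointwise[OF D, symmetric] by (simp add: mult_ac)
  qed
  also have "\<dots> = K * ((\<integral>s. Phi lam \<alpha> (0 + 2 * s) \<partial>lborel) - 2 * (\<integral>s. Psi lam \<alpha> \<Delta> (- \<Delta> + 2 * s) \<partial>lborel)
       + (\<integral>s. Phi lam \<alpha> (- 2 * \<Delta> + 2 * s) \<partial>lborel))"
    using I1 I2 I3 by simp
  also have "\<dots> = K * ((\<integral>u. Phi lam \<alpha> u \<partial>lborel) - (\<integral>u. Psi lam \<alpha> \<Delta> u \<partial>lborel))"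
    unfolding J1 J2 J3 by simp
  also have "(\<integral>u. Phi lam \<alpha> u \<partial>lborel) - (\<integral>u. Psi lam \<alpha> \<Delta> u \<partial>lborel) = (\<integral>u. Phi lam \<alpha> u - Psi lam \<alpha> \<Delta> u \<partial>lborel)"
    using IP IS by simp
  also have "(\<lambda>u. Phi lam \<alpha> u - Psi lam \<alpha> \<Delta> u) = (\<lambda>u. indicator {..\<Delta>} u * Phi lam \<alpha> u)"
    by (auto simp: Psi_def indicator_def)
  finally show ?thesis .
qed

lemma Phi_int_lower:
  assumes lam: "lam > 0" and al: "0 < \<alpha>" "\<alpha> < 2" and D: "0 < \<Delta>" "\<Delta> < 1"
  shows "(\<integral>u. indicator {..\<Delta>} u * Phi lam \<alpha> u \<partial>lborel) \<ge> exp (- lam) * \<Delta> powr (1 - \<alpha> / 2)"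
proof -
  define c where "c = exp (- lam) * \<Delta> powr (- \<alpha> / 2)"
  have "(\<integral>u. indicator {0<..\<Delta>} u * c \<partial>lborel) \<le> (\<integral>u. indicator {..\<Delta>} u * Phi lam \<alpha> u \<partial>lborel)"
  proof (rule integral_mono)
    show "integrable lborel (\<lambda>u. indicator {0<..\<Delta>} u * c)"
    proof -
      have "integrable lborel (indicator {0<..\<Delta>} :: real \<Rightarrow> real)" by (rule integrable_real_indicator) (simp_all add: less_imp_le[OF D(1)])
      then show ?thesis by simp
    qed
    show "integrable lborel (\<lambda>u. indicator {..\<Delta>} u * Phi lam \<alpha> u)"
      using integrable_mult_indicator[OF _ Phi_integrable[OF lam al], of "{..\<Delta>}"] by simp
    fix u :: real
    show "indicator {0<..\<Delta>} u * c \<le> indicator {..\<Delta>} u * Phi lam \<alpha> u"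
    proof (cases "0 < u \<and> u \<le> \<Delta>")
      case True
      have "exp (- lam) \<le> exp (- lam * u)" using True D lam by (simp add: mult_le_cancel_left1)
      moreover have "\<Delta> powr (- \<alpha> / 2) \<le> u powr (- \<alpha> / 2)"
        using True al by (intro powr_mono2') auto
      ultimately have "c \<le> Phi lam \<alpha> u" using True unfolding c_def Phi_def
        by (simp add: mult_mono)
      then show ?thesis using True by (simp add: indicator_def)
    next
      case False
      then show ?thesis by (auto simp: indicator_def Phi_nonneg)
    qed
  qed
  also have "(\<integral>u. indicator {0<..\<Delta>} u * c \<partial>lborel) = c * \<Delta>"
  proof -
    have "(\<integral>u. indicator {0<..\<Delta>} u * c \<partial>lborel) = (\<integral>u. c * indicator {0<..\<Delta>} u \<partial>lborel)"
      by (simp only: mult.commute)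
    also have "\<dots> = c * (\<integral>u. indicator {0<..\<Delta>} u \<partial>lborel)"
      by (rule Bochner_Integration.integral_mult_right) (rule integrable_real_indicator, simp_all add: less_imp_le[OF D(1)])
    also have "(\<integral>u. indicator {0<..\<Delta>} u \<partial>lborel) = measure lborel {0<..\<Delta>}"
      by (simp only: Bochner_Integration.integral_indicator space_lborel space_borel Int_UNIV_right)
    also have "measure lborel {0<..\<Delta>} = \<Delta>" using D by (simp only: measure_lborel_Ioc)
    finally show ?thesis .
  qed
  also have "c * \<Delta> = exp (- lam) * \<Delta> powr (1 - \<alpha> / 2)"
  proof -
    have "\<Delta> powr (1 - \<alpha> / 2) = \<Delta> powr (- \<alpha> / 2 + 1)" by (simp add: algebra_simps)
    also have "\<dots> = \<Delta> powr (- \<alpha> / 2) * \<Delta> powr 1" by (rule powr_add)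
    also have "\<Delta> powr 1 = \<Delta>" using D by simp
    finally show ?thesis unfolding c_def by (simp only: mult.assoc)
  qed
  finally show ?thesis .
qed

definition gg :: "real \<Rightarrow> real \<Rightarrow> real \<Rightarrow> real \<Rightarrow> real \<Rightarrow> real" where
  "gg d \<kappa> lam r t = (2 * pi * \<kappa> * t) powr (- d / 2) * exp (- r / (2 * \<kappa> * t) - lam * t)"

lemma gg_deriv:
  assumes k: "\<kappa> > 0" and t: "t > 0"
  shows "(gg d \<kappa> lam r has_real_derivative gg d \<kappa> lam r t * (- d / (2 * t) + r / (2 * \<kappa> * t\<^sup>2) - lam)) (at t)"
proof -
  have D: "(gg d \<kappa> lam r has_real_derivative
     (- d / 2) * (2 * pi * \<kappa> * t) powr (- d / 2 - 1) * (2 * pi * \<kappa>) * exp (- r / (2 * \<kappa> * t) - lam * t)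
     + (2 * pi * \<kappa> * t) powr (- d / 2) * (exp (- r / (2 * \<kappa> * t) - lam * t) * (r / (2 * \<kappa> * t\<^sup>2) - lam))) (at t)"
    unfolding gg_def[abs_def] using k t by (auto intro!: derivative_eq_intros simp: power2_eq_square field_simps)
  have eq: "(- d / 2) * (2 * pi * \<kappa> * t) powr (- d / 2 - 1) * (2 * pi * \<kappa>) = (2 * pi * \<kappa> * t) powr (- d / 2) * (- d / (2 * t))"
  proof -
    define X where "X = 2 * pi * \<kappa> * t"
    have X: "X > 0" using k t by (simp add: X_def)
    have "X powr (- d / 2 - 1) = X powr (- d / 2) / X" using X by (simp add: powr_diff)
    then have "(- d / 2) * X powr (- d / 2 - 1) * (2 * pi * \<kappa>) = (- d / 2) * X powr (- d / 2) * ((2 * pi * \<kappa>) / X)"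
      by simp
    also have "(2 * pi * \<kappa>) / X = 1 / t" using k t by (simp add: X_def)
    finally show ?thesis unfolding X_def[symmetric] by simp
  qed
  have "(- d / 2) * (2 * pi * \<kappa> * t) powr (- d / 2 - 1) * (2 * pi * \<kappa>) * exp (- r / (2 * \<kappa> * t) - lam * t)
     + (2 * pi * \<kappa> * t) powr (- d / 2) * (exp (- r / (2 * \<kappa> * t) - lam * t) * (r / (2 * \<kappa> * t\<^sup>2) - lam))
     = gg d \<kappa> lam r t * (- d / (2 * t) + r / (2 * \<kappa> * t\<^sup>2) - lam)"
    unfolding eq gg_def by (simp add: algebra_simps)
  with D show ?thesis by simp
qed


lemma two_le_exp: "0 \<le> y \<Longrightarrow> 2 * y \<le> exp (y::real)"
proof -
  assume y: "0 \<le> y"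
  have "1 + y / 2 \<le> exp (y / 2)" by (rule exp_ge_add_one_self)
  then have "(1 + y / 2)\<^sup>2 \<le> (exp (y / 2))\<^sup>2" using y by (intro power_mono) auto
  also have "(exp (y / 2))\<^sup>2 = exp y" by (simp add: power2_eq_square exp_add[symmetric])
  finally have "(1 + y / 2)\<^sup>2 \<le> exp y" .
  moreover have "2 * y \<le> (1 + y / 2)\<^sup>2"
  proof -
    have "0 \<le> (1 - y / 2)\<^sup>2" by simp
    then show ?thesis by (simp add: power2_eq_square algebra_simps)
  qed
  ultimately show ?thesis by linarith
qed

lemma xexp_le: "0 \<le> (x::real) \<Longrightarrow> x * exp (- x) \<le> exp (- x / 2)"
proof -
  assume x: "0 \<le> x"
  have "x \<le> exp (x / 2)" using two_le_exp[of "x/2"] x by simp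
  then have "x * exp (- x) \<le> exp (x / 2) * exp (- x)" by (intro mult_right_mono) auto
  also have "\<dots> = exp (- x / 2)" by (simp add: exp_add[symmetric])
  finally show ?thesis .
qed

lemma heatG_gg: "t > 0 \<Longrightarrow> heatG \<kappa> lam (y::'a::euclidean_space) t = gg (real DIM('a)) \<kappa> lam ((norm y)\<^sup>2) t"
  unfolding heatG_def gg_def by simp

lemma gg_nonneg: "gg d \<kappa> lam r t \<ge> 0" unfolding gg_def by simp

lemma Gprime_bound:
  assumes k: "\<kappa> > 0" and lam: "lam \<ge> 0" and d: "d \<ge> 0" and r: "r \<ge> 0"
    and xi: "s / 2 \<le> \<xi>" "\<xi> \<le> s" and s: "s > 0"
  shows "\<bar>gg d \<kappa> lam r \<xi> * (- d / (2 * \<xi>) + r / (2 * \<kappa> * \<xi>\<^sup>2) - lam)\<bar>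
    \<le> (d + 4) * (pi * \<kappa> * s) powr (- d / 2) / s * exp (- lam * s / 4) * exp (- r / (4 * \<kappa> * s))"
proof -
  have xi0: "\<xi> > 0" using xi s by linarith
  define P where "P = (2 * pi * \<kappa> * \<xi>) powr (- d / 2)"
  define E1 where "E1 = exp (- r / (2 * \<kappa> * \<xi>))"
  define L where "L = exp (- lam * \<xi>)"
  define Ps where "Ps = (pi * \<kappa> * s) powr (- d / 2)"
  define E4 where "E4 = exp (- r / (4 * \<kappa> * s))"
  define L4 where "L4 = exp (- lam * s / 4)"
  define R where "R = r / (2 * \<kappa> * \<xi>\<^sup>2)"
  have pos: "P \<ge> 0" "E1 \<ge> 0" "L \<ge> 0" "Ps \<ge> 0" "E4 \<ge> 0" "L4 \<ge> 0" "R \<ge> 0"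
    using k r xi0 by (simp_all add: P_def E1_def L_def Ps_def E4_def L4_def R_def)
  have gg: "gg d \<kappa> lam r \<xi> = P * E1 * L"
    by (simp add: gg_def P_def E1_def L_def exp_diff exp_minus field_simps)
  have hP: "P \<le> Ps" unfolding P_def Ps_def
    using k s xi d by (intro powr_mono2') auto
  have hE1: "E1 \<le> E4"
  proof -
    have "r / (4 * \<kappa> * s) \<le> r / (2 * \<kappa> * \<xi>)" by (rule frac_le) (use r k xi0 xi s in auto)
    then show ?thesis unfolding E1_def E4_def by simp
  qed
  have hL: "L \<le> L4"
  proof -
    have "lam * s \<le> lam * (4 * \<xi>)" by (rule mult_left_mono) (use lam xi xi0 in auto)
    then show ?thesis unfolding L_def L4_def by simp
  qed
  have hd: "d / (2 * \<xi>) \<le> d / s" using d xi xi0 s by (intro divide_left_mono) auto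
  have hR: "R * E1 \<le> (2 / s) * E4"
  proof -
    define x where "x = r / (2 * \<kappa> * \<xi>)"
    have x0: "x \<ge> 0" using r k xi0 by (simp add: x_def)
    have "R * E1 = (1 / \<xi>) * (x * exp (- x))"
      using xi0 k by (simp add: R_def E1_def x_def power2_eq_square field_simps)
    also have "\<dots> \<le> (2 / s) * exp (- x / 2)"
      using xexp_le[OF x0] xi xi0 s x0 by (intro mult_mono) (auto simp: field_simps)
    also have "exp (- x / 2) \<le> E4"
    proof -
      have "r / (4 * \<kappa> * s) \<le> r / (4 * \<kappa> * \<xi>)" by (rule frac_le) (use r k xi0 xi s in auto)
      moreover have "x / 2 = r / (4 * \<kappa> * \<xi>)" by (simp add: x_def)
      ultimately show ?thesis unfolding E4_def by simp
    qed
    then have "(2 / s) * exp (- x / 2) \<le> (2 / s) * E4" using s by (intro mult_left_mono) auto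
    finally show ?thesis .
  qed
  have hlam: "lam * L \<le> (2 / s) * L4"
  proof -
    have "lam * s \<le> lam * (2 * \<xi>)" by (rule mult_left_mono) (use lam xi xi0 in auto)
    then have "lam * L \<le> lam * exp (- lam * s / 2)" unfolding L_def
      using lam by (intro mult_left_mono) auto
    also have "\<dots> = (1 / s) * (4 * (lam * s / 4) * exp (- (lam * s / 4))) * L4"
      using s by (simp add: L4_def exp_add[symmetric] field_simps)
    also have "\<dots> \<le> (1 / s) * 2 * L4"
    proof -
      have "2 * (lam * s / 4) * exp (- (lam * s / 4)) \<le> 1"
      proof -
        have "2 * (lam * s / 4) \<le> exp (lam * s / 4)" using two_le_exp[of "lam * s / 4"] lam s by simp
        then have "2 * (lam * s / 4) * exp (- (lam * s / 4)) \<le> exp (lam * s / 4) * exp (- (lam * s / 4))"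
          by (intro mult_right_mono) auto
        then show ?thesis by (simp add: exp_add[symmetric])
      qed
      then have "4 * (lam * s / 4) * exp (- (lam * s / 4)) \<le> 2" by linarith
      then show ?thesis using s pos by (intro mult_right_mono) (auto simp: field_simps)
    qed
    finally show ?thesis by simp
  qed
  have "\<bar>gg d \<kappa> lam r \<xi> * (- d / (2 * \<xi>) + R - lam)\<bar> \<le> gg d \<kappa> lam r \<xi> * (d / (2 * \<xi>) + R + lam)"
  proof -
    have "\<bar>- d / (2 * \<xi>) + R - lam\<bar> \<le> d / (2 * \<xi>) + R + lam" using d xi0 pos lam by (simp add: abs_le_iff)
    then show ?thesis by (simp add: abs_mult gg_nonneg mult_left_mono)
  qed
  also have "\<dots> = P * ((d / (2 * \<xi>)) * E1 * L) + P * L * (R * E1) + P * E1 * (lam * L)"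
    unfolding gg by (simp add: algebra_simps)
  also have "\<dots> \<le> Ps * ((d / s) * E4 * L4) + Ps * L4 * ((2 / s) * E4) + Ps * E4 * ((2 / s) * L4)"
  proof (intro add_mono)
    show "P * ((d / (2 * \<xi>)) * E1 * L) \<le> Ps * ((d / s) * E4 * L4)"
      using pos hP hE1 hL hd d xi0 s by (intro mult_mono) (auto intro!: mult_nonneg_nonneg)
    show "P * L * (R * E1) \<le> Ps * L4 * ((2 / s) * E4)"
      by (rule mult_mono[OF mult_mono[OF hP hL] hR]) (use pos in auto)
    show "P * E1 * (lam * L) \<le> Ps * E4 * ((2 / s) * L4)"
      by (rule mult_mono[OF mult_mono[OF hP hE1] hlam]) (use pos lam in auto)
  qed
  also have "\<dots> = (d + 4) * Ps / s * L4 * E4" by (simp add: field_simps add_divide_distrib)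
  finally show ?thesis unfolding R_def Ps_def L4_def E4_def .
qed

lemma dG_bound:
  assumes k: "\<kappa> > 0" and lam: "lam \<ge> 0" and D: "\<Delta> > 0" and s: "2 * \<Delta> \<le> s"
  shows "\<bar>dG \<kappa> lam \<Delta> (y::'a::euclidean_space) s\<bar>
    \<le> \<Delta> * ((real DIM('a) + 4) * (pi * \<kappa> * s) powr (- real DIM('a) / 2) / s * exp (- lam * s / 4)) * exp (- (norm y)\<^sup>2 / (4 * \<kappa> * s))"
proof -
  define d where "d = real DIM('a)"
  define r where "r = (norm y)\<^sup>2"
  have s0: "s > 0" and sD: "s - \<Delta> > 0" using D s by linarith+
  have dG: "dG \<kappa> lam \<Delta> y s = gg d \<kappa> lam r s - gg d \<kappa> lam r (s - \<Delta>)"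
    unfolding dG_def d_def r_def using s0 sD by (simp add: heatG_gg)
  obtain \<xi> where xi: "s - \<Delta> < \<xi>" "\<xi> < s"
    and eq: "gg d \<kappa> lam r s - gg d \<kappa> lam r (s - \<Delta>) = (s - (s - \<Delta>)) * (gg d \<kappa> lam r \<xi> * (- d / (2 * \<xi>) + r / (2 * \<kappa> * \<xi>\<^sup>2) - lam))"
    using MVT2[of "s - \<Delta>" s "gg d \<kappa> lam r" "\<lambda>t. gg d \<kappa> lam r t * (- d / (2 * t) + r / (2 * \<kappa> * t\<^sup>2) - lam)"]
      gg_deriv[OF k] sD D by force
  have "\<bar>dG \<kappa> lam \<Delta> y s\<bar> = \<Delta> * \<bar>gg d \<kappa> lam r \<xi> * (- d / (2 * \<xi>) + r / (2 * \<kappa> * \<xi>\<^sup>2) - lam)\<bar>"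
    unfolding dG eq using D by (simp add: abs_mult)
  also have "\<dots> \<le> \<Delta> * ((d + 4) * (pi * \<kappa> * s) powr (- d / 2) / s * exp (- lam * s / 4) * exp (- r / (4 * \<kappa> * s)))"
    using D xi s by (intro mult_left_mono Gprime_bound k lam) (auto simp: d_def r_def)
  finally show ?thesis by (simp add: d_def r_def mult_ac)
qed

lemma pair_nn:
  assumes HK: "\<forall>s t. 0 < s \<longrightarrow> 0 < t \<longrightarrow>
     (\<integral>\<^sup>+p. ennreal (heatG \<kappa> lam (fst p) s * heatG \<kappa> lam (snd p) t) \<partial>\<Lambda>)
       = ennreal (K * (exp (- lam * (s + t)) * (s + t) powr (- \<alpha> / 2)))"
  shows "(\<integral>\<^sup>+p. ennreal (heatG \<kappa> lam (fst p :: 'a::euclidean_space) u * heatG \<kappa> lam (snd p) v) \<partial>\<Lambda>) = ennreal (K * Pf lam \<alpha> u v)"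
proof (cases "0 < u \<and> 0 < v")
  case True
  then show ?thesis using HK by (simp add: Pf_def Phi_def)
next
  case False
  then have e: "(\<lambda>p. ennreal (heatG \<kappa> lam (fst p :: 'a) u * heatG \<kappa> lam (snd p) v)) = (\<lambda>p. 0)" by (auto simp: heatG_def)
  have e2: "Pf lam \<alpha> u v = 0" using False by (auto simp: Pf_def)
  show ?thesis unfolding e e2 by simp
qed

lemma Pf_le: "Pf lam \<alpha> u v \<le> Phi lam \<alpha> (u + v)"
  by (simp add: Pf_def Phi_nonneg)

lemma N_swap:
  assumes N: "noise_cov \<alpha> (\<Lambda> :: ('a::euclidean_space \<times> 'a) measure)"
    and Fm: "(\<lambda>q. F (fst q) (snd q)) \<in> borel_measurable ((borel \<Otimes>\<^sub>M borel) \<Otimes>\<^sub>M (borel :: real measure))"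
  shows "(\<integral>\<^sup>+p. \<integral>\<^sup>+s. F p s \<partial>lborel \<partial>\<Lambda>) = (\<integral>\<^sup>+s. \<integral>\<^sup>+p. F p s \<partial>\<Lambda> \<partial>lborel)"
proof -
  interpret L: sigma_finite_measure \<Lambda> by (rule sigma_finite_noise[OF N])
  interpret P: pair_sigma_finite \<Lambda> lborel by standard
  have sets: "sets (\<Lambda> \<Otimes>\<^sub>M lborel) = sets ((borel \<Otimes>\<^sub>M borel) \<Otimes>\<^sub>M (borel :: real measure))"
    by (rule sets_pair_measure_cong[OF sets_noise[OF N]]) simp
  have "case_prod F \<in> borel_measurable (\<Lambda> \<Otimes>\<^sub>M lborel)"
    using Fm by (simp add: measurable_cong_sets[OF sets refl] split_beta')
  from P.Fubini'[OF this] show ?thesis by simp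
qed

lemma FTC_powr:
  assumes a: "a > 0" and q: "q > 1"
  shows "(\<integral>\<^sup>+x. ennreal (x powr (- q)) * indicator {a..} x \<partial>lborel) = ennreal (a powr (1 - q) / (q - 1))"
proof -
  have "(\<integral>\<^sup>+x. ennreal (x powr (- q)) * indicator {a..} x \<partial>lborel) = 0 - (- (a powr (1 - q)) / (q - 1))"
  proof (rule nn_integral_FTC_atLeast[where F="\<lambda>x. - (x powr (1 - q)) / (q - 1)"])
    show "(\<lambda>x. x powr (- q)) \<in> borel_measurable borel" by measurable
    fix x assume x: "a \<le> x"
    then have x0: "x > 0" using a by simp
    show "0 \<le> x powr (- q)" by simp
    have H: "((\<lambda>x. x powr (1 - q)) has_real_derivative (1 - q) * x powr (1 - q - 1)) (at x)"
      by (rule has_real_derivative_powr[OF x0])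
    have "((\<lambda>x. - (x powr (1 - q)) / (q - 1)) has_real_derivative - ((1 - q) * x powr (1 - q - 1)) / (q - 1)) (at x)"
      using DERIV_cdivide[OF DERIV_minus[OF H], of "q - 1"] by simp
    moreover have "- ((1 - q) * x powr (1 - q - 1)) / (q - 1) = x powr (- q)" using q by (simp add: field_simps)
    ultimately show "((\<lambda>x. - (x powr (1 - q)) / (q - 1)) has_real_derivative x powr (- q)) (at x)" by simp
  next
    have "((\<lambda>x. x powr (1 - q)) \<longlongrightarrow> 0) at_top"
      using q by (intro tendsto_neg_powr filterlim_ident) auto
    then have "((\<lambda>x. - (x powr (1 - q)) / (q - 1)) \<longlongrightarrow> - 0 / (q - 1)) at_top"
      by (intro tendsto_intros) (use q in auto)
    then show "((\<lambda>x. - (x powr (1 - q)) / (q - 1)) \<longlongrightarrow> 0) at_top" by simp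
  qed
  then show ?thesis by simp
qed

lemma B0_alg:
  fixes s \<kappa> d \<alpha> c \<Delta> lam :: real
  assumes s: "s > 0" and k: "\<kappa> > 0" and c: "c \<ge> 0" and lam: "lam \<ge> 0" and d: "d \<ge> 0"
  shows "(\<Delta> * ((d + 4) * (pi * \<kappa> * s) powr (- d / 2) / s * exp (- lam * s / 4)))\<^sup>2
      * (c * (((4 * \<kappa> * s) * (4 * \<kappa> * s)) powr (d / 2) * ((4 * \<kappa> * s) + (4 * \<kappa> * s)) powr (- \<alpha> / 2)))
    \<le> \<Delta>\<^sup>2 * (c * (d + 4)\<^sup>2 * (4 / pi) powr d * (8 * \<kappa>) powr (- \<alpha> / 2)) * s powr (- (2 + \<alpha> / 2))"
proof -
  define X where "X = pi * \<kappa> * s"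
  define Y where "Y = 4 * \<kappa> * s"
  define P where "P = X powr (- d / 2)"
  define E where "E = exp (- lam * s / 4)"
  define Q where "Q = (8 * \<kappa>) powr (- \<alpha> / 2)"
  define S where "S = s powr (- \<alpha> / 2)"
  have X: "X > 0" and Y: "Y > 0" using s k by (simp_all add: X_def Y_def)
  have e1: "P\<^sup>2 = 1 / X powr d"
  proof -
    have "P\<^sup>2 = X powr (- d / 2 + - d / 2)" unfolding P_def by (simp only: power2_eq_square powr_add)
    also have "- d / 2 + - d / 2 = - d" by simp
    also have "X powr (- d) = 1 / X powr d" by (simp add: powr_minus_divide)
    finally show ?thesis .
  qed
  have e2: "(Y * Y) powr (d / 2) = Y powr d"
  proof -
    have "(Y * Y) powr (d / 2) = Y powr (d / 2) * Y powr (d / 2)" by (rule powr_mult)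
    also have "\<dots> = Y powr (d / 2 + d / 2)" by (simp only: powr_add)
    also have "d / 2 + d / 2 = d" by simp
    finally show ?thesis .
  qed
  have e3: "Y powr d / X powr d = (4 / pi) powr d"
  proof -
    have "Y powr d / X powr d = (Y / X) powr d" by (rule powr_divide[symmetric])
    also have "Y / X = 4 / pi" using k s by (simp add: X_def Y_def)
    finally show ?thesis .
  qed
  have e4: "(Y + Y) powr (- \<alpha> / 2) = Q * S"
  proof -
    have "Y + Y = (8 * \<kappa>) * s" by (simp add: Y_def)
    then show ?thesis unfolding Q_def S_def by (simp only: powr_mult)
  qed
  have e5: "1 / s\<^sup>2 * S = s powr (- (2 + \<alpha> / 2))"
  proof -
    have "s powr (- (2 + \<alpha> / 2)) = s powr (- 2 + - \<alpha> / 2)" by simp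
    also have "\<dots> = s powr (- 2) * S" unfolding S_def by (simp only: powr_add)
    also have "s powr (- 2) = 1 / s\<^sup>2" using s by (simp add: powr_minus_divide)
    finally show ?thesis ..
  qed
  have ex: "E\<^sup>2 \<le> 1" unfolding E_def using lam s
    by (simp add: power2_eq_square exp_add[symmetric] mult_nonneg_nonneg)
  have "(\<Delta> * ((d + 4) * P / s * E))\<^sup>2 * (c * ((Y * Y) powr (d / 2) * (Y + Y) powr (- \<alpha> / 2)))
      = \<Delta>\<^sup>2 * (c * (d + 4)\<^sup>2 * (Y powr d * P\<^sup>2) * Q) * (1 / s\<^sup>2 * S) * E\<^sup>2"
    unfolding e2 e4 by (simp add: power_mult_distrib power_divide)
  also have "\<dots> = \<Delta>\<^sup>2 * (c * (d + 4)\<^sup>2 * (4 / pi) powr d * Q) * s powr (- (2 + \<alpha> / 2)) * E\<^sup>2"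
    unfolding e1 e5 e3[symmetric] by simp
  also have "\<dots> \<le> \<Delta>\<^sup>2 * (c * (d + 4)\<^sup>2 * (4 / pi) powr d * Q) * s powr (- (2 + \<alpha> / 2)) * 1"
    using ex c unfolding Q_def by (intro mult_left_mono) auto
  finally show ?thesis unfolding X_def Y_def P_def E_def Q_def by simp
qed


lemma Phi_half:
  assumes lam: "lam > 0" and al: "0 < \<alpha>" "\<alpha> < 2"
  shows "(\<integral>\<^sup>+x. ennreal (Phi lam \<alpha> (t + 2 * x)) \<partial>lborel) = ennreal (enn2real (\<integral>\<^sup>+u. ennreal (Phi lam \<alpha> u) \<partial>lborel) / 2)"
proof -
  define X where "X = (\<integral>\<^sup>+x. ennreal (Phi lam \<alpha> (t + 2 * x)) \<partial>lborel)"
  define PR where "PR = enn2real (\<integral>\<^sup>+u. ennreal (Phi lam \<alpha> u) \<partial>lborel)"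
  have PR: "(\<integral>\<^sup>+u. ennreal (Phi lam \<alpha> u) \<partial>lborel) = ennreal PR"
    unfolding PR_def using Phi_nn_fin[OF lam al] by simp
  have "(\<integral>\<^sup>+u. ennreal (Phi lam \<alpha> u) \<partial>lborel) = ennreal \<bar>2\<bar> * X"
    unfolding X_def by (rule nn_integral_real_affine) auto
  then have "ennreal 2 * X = ennreal PR" using PR by simp
  then have "ennreal (1/2) * (ennreal 2 * X) = ennreal (1/2) * ennreal PR" by simp
  moreover have "ennreal (1/2) * (ennreal 2 * X) = X"
  proof -
    have h: "ennreal (1/2) * ennreal 2 = 1" by (subst ennreal_mult[symmetric]) auto
    show ?thesis by (simp only: mult.assoc[symmetric] h mult_1)
  qed
  moreover have "ennreal (1/2) * ennreal PR = ennreal (PR / 2)"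
  proof -
    have "PR \<ge> 0" unfolding PR_def by simp
    then have "ennreal (1/2) * ennreal PR = ennreal (1/2 * PR)" by (subst ennreal_mult) auto
    then show ?thesis by simp
  qed
  ultimately show ?thesis unfolding X_def PR_def by simp
qed

lemma N_small:
  fixes \<Lambda> :: "('a::euclidean_space \<times> 'a) measure"
  assumes sets: "sets \<Lambda> = sets (borel \<Otimes>\<^sub>M borel)"
    and cK: "\<forall>a b. 0 < a \<longrightarrow> 0 < b \<longrightarrow>
     (\<integral>\<^sup>+p. ennreal (exp (- (norm (fst p))\<^sup>2 / a) * exp (- (norm (snd p))\<^sup>2 / b)) \<partial>\<Lambda>)
       = ennreal (c * ((a * b) powr (real DIM('a) / 2) * (a + b) powr (- \<alpha> / 2)))"
    and c: "c > 0" and k: "\<kappa> > 0" and lam: "lam \<ge> 0" and D: "\<Delta> > 0" and a: "2 * \<Delta> \<le> a" and al: "0 < \<alpha>"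
  shows "(\<integral>\<^sup>+s. \<integral>\<^sup>+p. indicator {a<..} s * ennreal (\<bar>dG \<kappa> lam \<Delta> (fst p :: 'a::euclidean_space) s\<bar> * \<bar>dG \<kappa> lam \<Delta> (snd p) s\<bar>) \<partial>\<Lambda> \<partial>lborel)
    \<le> ennreal (\<Delta>\<^sup>2 * (c * (real DIM('a) + 4)\<^sup>2 * (4 / pi) powr (real DIM('a)) * (8 * \<kappa>) powr (- \<alpha> / 2))
        * (a powr (1 - (2 + \<alpha> / 2)) / ((2 + \<alpha> / 2) - 1)))"
proof -
  define d where "d = real DIM('a)"
  define B0 where "B0 = c * (d + 4)\<^sup>2 * (4 / pi) powr d * (8 * \<kappa>) powr (- \<alpha> / 2)"
  define q where "q = 2 + \<alpha> / 2"
  have a0: "a > 0" using a D by linarith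
  have B0: "B0 \<ge> 0" using c by (simp add: B0_def)
  have q1: "q > 1" using al by (simp add: q_def)
  have "(\<integral>\<^sup>+s. \<integral>\<^sup>+p. indicator {a<..} s * ennreal (\<bar>dG \<kappa> lam \<Delta> (fst p :: 'a) s\<bar> * \<bar>dG \<kappa> lam \<Delta> (snd p) s\<bar>) \<partial>\<Lambda> \<partial>lborel)
     \<le> (\<integral>\<^sup>+s. ennreal (\<Delta>\<^sup>2 * B0) * (ennreal (s powr (- q)) * indicator {a..} s) \<partial>lborel)"
  proof (rule nn_integral_mono)
    fix s :: real
    show "(\<integral>\<^sup>+p. indicator {a<..} s * ennreal (\<bar>dG \<kappa> lam \<Delta> (fst p :: 'a) s\<bar> * \<bar>dG \<kappa> lam \<Delta> (snd p) s\<bar>) \<partial>\<Lambda>)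
      \<le> ennreal (\<Delta>\<^sup>2 * B0) * (ennreal (s powr (- q)) * indicator {a..} s)"
    proof (cases "s > a")
      case False
      then show ?thesis by simp
    next
      case True
      have s0: "s > 0" and s2: "2 * \<Delta> \<le> s" using True a0 a by linarith+
      define V where "V = (d + 4) * (pi * \<kappa> * s) powr (- d / 2) / s * exp (- lam * s / 4)"
      have V: "V \<ge> 0" using s0 by (simp add: V_def d_def)
      have "(\<integral>\<^sup>+p. indicator {a<..} s * ennreal (\<bar>dG \<kappa> lam \<Delta> (fst p :: 'a) s\<bar> * \<bar>dG \<kappa> lam \<Delta> (snd p) s\<bar>) \<partial>\<Lambda>)
          \<le> (\<integral>\<^sup>+p. ennreal ((\<Delta> * V)\<^sup>2) * ennreal (exp (- (norm (fst p))\<^sup>2 / (4 * \<kappa> * s)) * exp (- (norm (snd p))\<^sup>2 / (4 * \<kappa> * s))) \<partial>\<Lambda>)"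
      proof (rule nn_integral_mono)
        fix p :: "'a \<times> 'a"
        have b1: "\<bar>dG \<kappa> lam \<Delta> (fst p) s\<bar> \<le> \<Delta> * V * exp (- (norm (fst p))\<^sup>2 / (4 * \<kappa> * s))"
          using dG_bound[OF k lam D s2, of "fst p"] unfolding V_def d_def .
        have b2: "\<bar>dG \<kappa> lam \<Delta> (snd p) s\<bar> \<le> \<Delta> * V * exp (- (norm (snd p))\<^sup>2 / (4 * \<kappa> * s))"
          using dG_bound[OF k lam D s2, of "snd p"] unfolding V_def d_def .
        have "\<bar>dG \<kappa> lam \<Delta> (fst p) s\<bar> * \<bar>dG \<kappa> lam \<Delta> (snd p) s\<bar>
           \<le> (\<Delta> * V * exp (- (norm (fst p))\<^sup>2 / (4 * \<kappa> * s))) * (\<Delta> * V * exp (- (norm (snd p))\<^sup>2 / (4 * \<kappa> * s)))"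
          using b1 b2 D V by (intro mult_mono) auto
        also have "\<dots> = (\<Delta> * V)\<^sup>2 * (exp (- (norm (fst p))\<^sup>2 / (4 * \<kappa> * s)) * exp (- (norm (snd p))\<^sup>2 / (4 * \<kappa> * s)))"
          by (simp add: power2_eq_square mult_ac)
        finally show "indicator {a<..} s * ennreal (\<bar>dG \<kappa> lam \<Delta> (fst p) s\<bar> * \<bar>dG \<kappa> lam \<Delta> (snd p) s\<bar>)
          \<le> ennreal ((\<Delta> * V)\<^sup>2) * ennreal (exp (- (norm (fst p))\<^sup>2 / (4 * \<kappa> * s)) * exp (- (norm (snd p))\<^sup>2 / (4 * \<kappa> * s)))"
          using True by (simp add: ennreal_mult[symmetric] ennreal_leI)
      qed
      also have "\<dots> = ennreal ((\<Delta> * V)\<^sup>2) * (\<integral>\<^sup>+p. ennreal (exp (- (norm (fst p))\<^sup>2 / (4 * \<kappa> * s)) * exp (- (norm (snd p))\<^sup>2 / (4 * \<kappa> * s))) \<partial>\<Lambda>)"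
        by (rule nn_integral_cmult) (simp add: measurable_cong_sets[OF sets refl])
      also have "\<dots> = ennreal ((\<Delta> * V)\<^sup>2) * ennreal (c * (((4 * \<kappa> * s) * (4 * \<kappa> * s)) powr (d / 2) * ((4 * \<kappa> * s) + (4 * \<kappa> * s)) powr (- \<alpha> / 2)))"
      proof -
        have p: "0 < 4 * \<kappa> * s" using k s0 by simp
        show ?thesis unfolding d_def using cK p by simp
      qed
      also have "\<dots> = ennreal ((\<Delta> * V)\<^sup>2 * (c * (((4 * \<kappa> * s) * (4 * \<kappa> * s)) powr (d / 2) * ((4 * \<kappa> * s) + (4 * \<kappa> * s)) powr (- \<alpha> / 2))))"
        using c by (subst ennreal_mult) auto
      also have "\<dots> \<le> ennreal (\<Delta>\<^sup>2 * B0 * s powr (- q))"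
        unfolding V_def B0_def q_def using B0_alg[OF s0 k less_imp_le[OF c] lam, of d \<Delta> \<alpha>]
        by (intro ennreal_leI) (simp add: d_def)
      also have "\<dots> = ennreal (\<Delta>\<^sup>2 * B0) * (ennreal (s powr (- q)) * indicator {a..} s)"
        using True B0 by (simp add: ennreal_mult indicator_def)
      finally show ?thesis .
    qed
  qed
  also have "\<dots> = ennreal (\<Delta>\<^sup>2 * B0) * (\<integral>\<^sup>+s. ennreal (s powr (- q)) * indicator {a..} s \<partial>lborel)"
    by (rule nn_integral_cmult) measurable
  also have "\<dots> = ennreal (\<Delta>\<^sup>2 * B0) * ennreal (a powr (1 - q) / (q - 1))"
    by (simp only: FTC_powr[OF a0 q1])
  also have "\<dots> = ennreal (\<Delta>\<^sup>2 * B0 * (a powr (1 - q) / (q - 1)))"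
    using B0 q1 by (subst ennreal_mult) auto
  finally show ?thesis unfolding B0_def q_def d_def .
qed

lemma abs_diff_prod_le:
  fixes a b c d :: real
  assumes "0 \<le> a" "0 \<le> b" "0 \<le> c" "0 \<le> d"
  shows "\<bar>a - b\<bar> * \<bar>c - d\<bar> \<le> a * c + a * d + b * c + b * d"
proof -
  have "\<bar>a - b\<bar> * \<bar>c - d\<bar> \<le> (a + b) * (c + d)"
    using assms by (intro mult_mono) auto
  then show ?thesis by (simp add: algebra_simps)
qed

lemma N_large:
  fixes \<Lambda> :: "('a::euclidean_space \<times> 'a) measure"
  assumes sets: "sets \<Lambda> = sets (borel \<Otimes>\<^sub>M borel)"
    and HK: "\<forall>s t. 0 < s \<longrightarrow> 0 < t \<longrightarrow>
     (\<integral>\<^sup>+p. ennreal (heatG \<kappa> lam (fst p) s * heatG \<kappa> lam (snd p) t) \<partial>\<Lambda>)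
       = ennreal (K * (exp (- lam * (s + t)) * (s + t) powr (- \<alpha> / 2)))"
    and K: "K > 0" and lam: "lam > 0" and al: "0 < \<alpha>" "\<alpha> < 2"
  shows "(\<integral>\<^sup>+s. \<integral>\<^sup>+p. indicator {a<..} s * ennreal (\<bar>dG \<kappa> lam \<Delta> (fst p) s\<bar> * \<bar>dG \<kappa> lam \<Delta> (snd p) s\<bar>) \<partial>\<Lambda> \<partial>lborel)
    \<le> ennreal (2 * K * enn2real (\<integral>\<^sup>+u. ennreal (Phi lam \<alpha> u) \<partial>lborel))"
proof -
  define PR where "PR = enn2real (\<integral>\<^sup>+u. ennreal (Phi lam \<alpha> u) \<partial>lborel)"
  have PR: "PR \<ge> 0" by (simp add: PR_def)
  define h where "h u v p = ennreal (heatG \<kappa> lam (fst p) u * heatG \<kappa> lam (snd p) v)" for u v and p :: "'a \<times> 'a"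
  have hm: "h u v \<in> borel_measurable \<Lambda>" for u v
    unfolding h_def by (simp add: measurable_cong_sets[OF sets refl])
  have hi: "(\<integral>\<^sup>+p. h u v p \<partial>\<Lambda>) = ennreal (K * Pf lam \<alpha> u v)" for u v
    unfolding h_def by (rule pair_nn[OF HK])
  have hle: "(\<integral>\<^sup>+p. h u v p \<partial>\<Lambda>) \<le> ennreal K * ennreal (Phi lam \<alpha> (u + v))" for u v
    unfolding hi using K by (simp add: ennreal_mult[symmetric] Pf_le Phi_nonneg ennreal_leI mult_left_mono)
  define G where "G s = ennreal K * (ennreal (Phi lam \<alpha> (0 + 2 * s)) + ennreal (Phi lam \<alpha> (- \<Delta> + 2 * s))
      + ennreal (Phi lam \<alpha> (- \<Delta> + 2 * s)) + ennreal (Phi lam \<alpha> (- 2 * \<Delta> + 2 * s)))" for s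
  have "(\<integral>\<^sup>+s. \<integral>\<^sup>+p. indicator {a<..} s * ennreal (\<bar>dG \<kappa> lam \<Delta> (fst p) s\<bar> * \<bar>dG \<kappa> lam \<Delta> (snd p) s\<bar>) \<partial>\<Lambda> \<partial>lborel)
     \<le> (\<integral>\<^sup>+s. G s \<partial>lborel)"
  proof (rule nn_integral_mono)
    fix s :: real
    have "(\<integral>\<^sup>+p. indicator {a<..} s * ennreal (\<bar>dG \<kappa> lam \<Delta> (fst p) s\<bar> * \<bar>dG \<kappa> lam \<Delta> (snd p) s\<bar>) \<partial>\<Lambda>)
        \<le> (\<integral>\<^sup>+p. h s s p + h s (s - \<Delta>) p + h (s - \<Delta>) s p + h (s - \<Delta>) (s - \<Delta>) p \<partial>\<Lambda>)"
    proof (rule nn_integral_mono)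
      fix p :: "'a \<times> 'a"
      have "\<bar>dG \<kappa> lam \<Delta> (fst p) s\<bar> * \<bar>dG \<kappa> lam \<Delta> (snd p) s\<bar>
         \<le> heatG \<kappa> lam (fst p) s * heatG \<kappa> lam (snd p) s + heatG \<kappa> lam (fst p) s * heatG \<kappa> lam (snd p) (s - \<Delta>)
           + heatG \<kappa> lam (fst p) (s - \<Delta>) * heatG \<kappa> lam (snd p) s + heatG \<kappa> lam (fst p) (s - \<Delta>) * heatG \<kappa> lam (snd p) (s - \<Delta>)"
        unfolding dG_def by (rule abs_diff_prod_le) (simp_all add: heatG_nonneg)
      then have "ennreal (\<bar>dG \<kappa> lam \<Delta> (fst p) s\<bar> * \<bar>dG \<kappa> lam \<Delta> (snd p) s\<bar>)
         \<le> h s s p + h s (s - \<Delta>) p + h (s - \<Delta>) s p + h (s - \<Delta>) (s - \<Delta>) p"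
        unfolding h_def by (simp add: ennreal_plus[symmetric] heatG_nonneg ennreal_leI del: ennreal_plus)
      moreover have "indicator {a<..} s * ennreal (\<bar>dG \<kappa> lam \<Delta> (fst p) s\<bar> * \<bar>dG \<kappa> lam \<Delta> (snd p) s\<bar>)
         \<le> ennreal (\<bar>dG \<kappa> lam \<Delta> (fst p) s\<bar> * \<bar>dG \<kappa> lam \<Delta> (snd p) s\<bar>)"
        by (simp add: indicator_def)
      ultimately show "indicator {a<..} s * ennreal (\<bar>dG \<kappa> lam \<Delta> (fst p) s\<bar> * \<bar>dG \<kappa> lam \<Delta> (snd p) s\<bar>)
         \<le> h s s p + h s (s - \<Delta>) p + h (s - \<Delta>) s p + h (s - \<Delta>) (s - \<Delta>) p"
        by (meson order_trans)
    qed
    also have "\<dots> = (\<integral>\<^sup>+p. h s s p \<partial>\<Lambda>) + (\<integral>\<^sup>+p. h s (s - \<Delta>) p \<partial>\<Lambda>) + (\<integral>\<^sup>+p. h (s - \<Delta>) s p \<partial>\<Lambda>) + (\<integral>\<^sup>+p. h (s - \<Delta>) (s - \<Delta>) p \<partial>\<Lambda>)"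
      using hm by (simp add: nn_integral_add)
    also have "\<dots> \<le> G s"
    proof -
      have a1: "s + s = 0 + 2 * s" "s + (s - \<Delta>) = - \<Delta> + 2 * s" "s - \<Delta> + s = - \<Delta> + 2 * s"
        "s - \<Delta> + (s - \<Delta>) = - 2 * \<Delta> + 2 * s" by simp_all
      show ?thesis unfolding G_def distrib_left
        using hle[of s s] hle[of s "s - \<Delta>"] hle[of "s - \<Delta>" s] hle[of "s - \<Delta>" "s - \<Delta>"]
        unfolding a1 by (intro add_mono) auto
    qed
    finally show "(\<integral>\<^sup>+p. indicator {a<..} s * ennreal (\<bar>dG \<kappa> lam \<Delta> (fst p) s\<bar> * \<bar>dG \<kappa> lam \<Delta> (snd p) s\<bar>) \<partial>\<Lambda>) \<le> G s" .
  qed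
  also have "(\<integral>\<^sup>+s. G s \<partial>lborel) = ennreal K * (ennreal (PR / 2) + ennreal (PR / 2) + ennreal (PR / 2) + ennreal (PR / 2))"
    unfolding G_def PR_def
    using Phi_half[OF lam al, of 0, simplified] Phi_half[OF lam al, of "- \<Delta>", simplified]
      Phi_half[OF lam al, of "- 2 * \<Delta>", simplified]
    by (subst nn_integral_cmult, measurable, simp add: nn_integral_add)
  also have "\<dots> = ennreal (2 * K * PR)"
    using K PR by (simp add: ennreal_plus[symmetric] ennreal_mult[symmetric] del: ennreal_plus)
  finally show ?thesis unfolding PR_def .
qed

lemma F_meas:
  fixes \<Lambda> :: "('a::euclidean_space \<times> 'a) measure"
  assumes N: "noise_cov \<alpha> \<Lambda>"
  shows "(\<lambda>(p, s). indicator {a<..} s * ennreal (\<bar>dG \<kappa> lam \<Delta> (fst p) s\<bar> * \<bar>dG \<kappa> lam \<Delta> (snd p) s\<bar>))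
    \<in> borel_measurable (\<Lambda> \<Otimes>\<^sub>M lborel)"
proof -
  have sets: "sets (\<Lambda> \<Otimes>\<^sub>M lborel) = sets ((borel \<Otimes>\<^sub>M borel) \<Otimes>\<^sub>M (borel :: real measure))"
    by (rule sets_pair_measure_cong[OF sets_noise[OF N]]) simp
  show ?thesis unfolding measurable_cong_sets[OF sets refl] dG_def split_beta' by measurable
qed

lemma Pi_bound:
  fixes \<Lambda> :: "('a::euclidean_space \<times> 'a) measure"
  assumes N: "noise_cov \<alpha> \<Lambda>" and T: "tau2 \<kappa> lam \<Lambda> \<Delta> > 0"
  shows "Pi_abs \<kappa> lam \<Lambda> \<Delta> ({a<..} \<times> UNIV \<times> UNIV)
    \<le> ennreal (1 / tau2 \<kappa> lam \<Lambda> \<Delta>) *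
      (\<integral>\<^sup>+s. \<integral>\<^sup>+p. indicator {a<..} s * ennreal (\<bar>dG \<kappa> lam \<Delta> (fst p) s\<bar> * \<bar>dG \<kappa> lam \<Delta> (snd p) s\<bar>) \<partial>\<Lambda> \<partial>lborel)"
proof -
  define T where "T = tau2 \<kappa> lam \<Lambda> \<Delta>"
  define F where "F p s = indicator {a<..} s * ennreal (\<bar>dG \<kappa> lam \<Delta> (fst p) s\<bar> * \<bar>dG \<kappa> lam \<Delta> (snd p) s\<bar>)" for p :: "'a \<times> 'a" and s :: real
  have Fm: "case_prod F \<in> borel_measurable (\<Lambda> \<Otimes>\<^sub>M lborel)"
    unfolding F_def using F_meas[OF N] by (simp add: split_beta')
  interpret L: sigma_finite_measure \<Lambda> by (rule sigma_finite_noise[OF N])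
  interpret P: pair_sigma_finite \<Lambda> lborel by standard
  have Fs: "F p \<in> borel_measurable lborel" for p
    unfolding F_def dG_def by measurable
  have "Pi_abs \<kappa> lam \<Lambda> \<Delta> ({a<..} \<times> UNIV \<times> UNIV) \<le> (\<integral>\<^sup>+p. \<integral>\<^sup>+s. ennreal (1 / T) * F p s \<partial>lborel \<partial>\<Lambda>)"
    unfolding Pi_abs_def
  proof (intro nn_integral_mono)
    fix p :: "'a \<times> 'a" and s :: real
    show "indicator ({0<..} \<times> UNIV) (s, fst p, snd p) * indicator ({a<..} \<times> UNIV \<times> UNIV) (s, fst p, snd p) *
       ennreal (\<bar>dG \<kappa> lam \<Delta> (fst p) s\<bar> * \<bar>dG \<kappa> lam \<Delta> (snd p) s\<bar> / tau2 \<kappa> lam \<Lambda> \<Delta>) \<le> ennreal (1 / T) * F p s"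
    proof (cases "s > a")
      case True
      have "ennreal (\<bar>dG \<kappa> lam \<Delta> (fst p) s\<bar> * \<bar>dG \<kappa> lam \<Delta> (snd p) s\<bar> / T)
          = ennreal (1 / T) * ennreal (\<bar>dG \<kappa> lam \<Delta> (fst p) s\<bar> * \<bar>dG \<kappa> lam \<Delta> (snd p) s\<bar>)"
        using T unfolding T_def by (subst ennreal_mult[symmetric]) auto
      then show ?thesis using True unfolding F_def T_def by (simp add: indicator_def)
    next
      case False
      then show ?thesis by (simp add: indicator_def)
    qed
  qed
  also have "\<dots> = (\<integral>\<^sup>+p. ennreal (1 / T) * (\<integral>\<^sup>+s. F p s \<partial>lborel) \<partial>\<Lambda>)"
    by (intro nn_integral_cong nn_integral_cmult Fs)
  also have "\<dots> = ennreal (1 / T) * (\<integral>\<^sup>+p. \<integral>\<^sup>+s. F p s \<partial>lborel \<partial>\<Lambda>)"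
    by (rule nn_integral_cmult) (rule lborel.borel_measurable_nn_integral[OF Fm])
  also have "(\<integral>\<^sup>+p. \<integral>\<^sup>+s. F p s \<partial>lborel \<partial>\<Lambda>) = (\<integral>\<^sup>+s. \<integral>\<^sup>+p. F p s \<partial>\<Lambda> \<partial>lborel)"
    by (rule P.Fubini'[OF Fm, symmetric])
  finally show ?thesis unfolding F_def T_def .
qed

theorem lemmaB4:
  fixes \<kappa> lam \<alpha> :: real and \<Delta> :: "nat \<Rightarrow> real"
    and \<Lambda> :: "('a::euclidean_space \<times> 'a) measure"
  assumes "\<kappa> > 0" and "lam > 0"
    and "\<And>n. 0 < \<Delta> n \<and> \<Delta> n < 1"
    and "\<Delta> \<longlonglongrightarrow> 0"
    and "noise_cov \<alpha> \<Lambda>"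
    and "0 < \<alpha>" and "\<alpha> < 2" and "\<alpha> \<le> real DIM('a)"
  shows "\<forall>\<theta>::real. 0 < \<theta> \<and> \<theta> < 1 \<longrightarrow>
           (\<exists>C>0. \<forall>n. Pi_abs \<kappa> lam \<Lambda> (\<Delta> n) ({\<Delta> n powr (1 - \<theta>)<..} \<times> UNIV \<times> UNIV)
                     \<le> ennreal (C * \<Delta> n powr ((1 + \<alpha> / 2) * \<theta>)))"
proof (intro allI impI)
  fix \<theta> :: real assume th: "0 < \<theta> \<and> \<theta> < 1"
  have k: "\<kappa> > 0" and lam: "lam > 0" and N: "noise_cov \<alpha> \<Lambda>" and al: "0 < \<alpha>" "\<alpha> < 2"
    using assms by auto
  have sets: "sets \<Lambda> = sets (borel \<Otimes>\<^sub>M borel)" by (rule sets_noise[OF N])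
  obtain c where c: "c > 0" and cK: "\<forall>a b. 0 < a \<longrightarrow> 0 < b \<longrightarrow>
     (\<integral>\<^sup>+p. ennreal (exp (- (norm (fst p))\<^sup>2 / a) * exp (- (norm (snd p))\<^sup>2 / b)) \<partial>\<Lambda>)
       = ennreal (c * ((a * b) powr (real DIM('a) / 2) * (a + b) powr (- \<alpha> / 2)))"
    using KL[OF N] by blast
  obtain K where K: "K > 0" and HK: "\<forall>s t. 0 < s \<longrightarrow> 0 < t \<longrightarrow>
     (\<integral>\<^sup>+p. ennreal (heatG \<kappa> lam (fst p) s * heatG \<kappa> lam (snd p) t) \<partial>\<Lambda>)
       = ennreal (K * (exp (- lam * (s + t)) * (s + t) powr (- \<alpha> / 2)))"
    using heat_prod_int[OF N k] by blast
  define d where "d = real DIM('a)"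
  define \<nu> where "\<nu> = 1 + \<alpha> / 2"
  define PR where "PR = enn2real (\<integral>\<^sup>+u. ennreal (Phi lam \<alpha> u) \<partial>lborel)"
  define M where "M = 2 * K * PR"
  define B where "B = c * (d + 4)\<^sup>2 * (4 / pi) powr d * (8 * \<kappa>) powr (- \<alpha> / 2) / (1 + \<alpha> / 2)"
  define T0 where "T0 = K * exp (- lam)"
  define C where "C = B / T0 + M / T0 * 2 powr (1 / \<theta>) * 2 powr \<nu> + 1"
  have PR: "PR \<ge> 0" by (simp add: PR_def)
  have M: "M \<ge> 0" using K PR by (simp add: M_def)
  have B: "B \<ge> 0" using c al by (simp add: B_def)
  have T0: "T0 > 0" using K by (simp add: T0_def)
  have nu: "\<nu> > 0" using al by (simp add: \<nu>_def)
  show "\<exists>C>0. \<forall>n. Pi_abs \<kappa> lam \<Lambda> (\<Delta> n) ({\<Delta> n powr (1 - \<theta>)<..} \<times> UNIV \<times> UNIV)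
                     \<le> ennreal (C * \<Delta> n powr ((1 + \<alpha> / 2) * \<theta>))"
  proof (intro exI[of _ C] conjI allI)
    show "C > 0" unfolding C_def using B M T0 by (intro add_nonneg_pos) auto
    fix n
    define \<delta> where "\<delta> = \<Delta> n"
    have D: "0 < \<delta>" "\<delta> < 1" using assms(3)[of n] by (auto simp: \<delta>_def)
    define a where "a = \<delta> powr (1 - \<theta>)"
    define T where "T = tau2 \<kappa> lam \<Lambda> \<delta>"
    have Tlow: "T \<ge> T0 * \<delta> powr (1 - \<alpha> / 2)"
    proof -
      have "T = K * (\<integral>u. indicator {..\<delta>} u * Phi lam \<alpha> u \<partial>lborel)"
        unfolding T_def by (rule tau2_eq[OF sets HK K lam al D(1)])
      also have "\<dots> \<ge> K * (exp (- lam) * \<delta> powr (1 - \<alpha> / 2))"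
        using Phi_int_lower[OF lam al D] K by (intro mult_left_mono) auto
      finally show ?thesis by (simp add: T0_def mult_ac)
    qed
    have dpos: "\<delta> powr (1 - \<alpha> / 2) > 0" using D by simp
    have T: "T > 0" using Tlow T0 dpos by (metis mult_pos_pos order_less_le_trans)
    define NS where "NS = (\<integral>\<^sup>+s. \<integral>\<^sup>+p. indicator {a<..} s * ennreal (\<bar>dG \<kappa> lam \<delta> (fst p) s\<bar> * \<bar>dG \<kappa> lam \<delta> (snd p) s\<bar>) \<partial>\<Lambda> \<partial>lborel)"
    have PB: "Pi_abs \<kappa> lam \<Lambda> \<delta> ({a<..} \<times> UNIV \<times> UNIV) \<le> ennreal (1 / T) * NS"
      unfolding NS_def T_def using Pi_bound[OF N T[unfolded T_def]] .
    have key: "Pi_abs \<kappa> lam \<Lambda> \<delta> ({a<..} \<times> UNIV \<times> UNIV) \<le> ennreal (C * \<delta> powr (\<nu> * \<theta>))"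
    proof (cases "\<delta> powr \<theta> \<le> 1 / 2")
      case True
      have a2: "2 * \<delta> \<le> a"
      proof -
        have "\<delta> = \<delta> powr \<theta> * a" unfolding a_def using D by (simp add: powr_add[symmetric])
        also have "\<dots> \<le> 1 / 2 * a" using True by (intro mult_right_mono) (auto simp: a_def)
        finally show ?thesis by simp
      qed
      define X where "X = \<delta>\<^sup>2 * (c * (real DIM('a) + 4)\<^sup>2 * (4 / pi) powr (real DIM('a)) * (8 * \<kappa>) powr (- \<alpha> / 2))
        * (a powr (1 - (2 + \<alpha> / 2)) / ((2 + \<alpha> / 2) - 1))"
      have NSb: "NS \<le> ennreal X"
        unfolding NS_def X_def by (rule N_small[OF sets cK c k less_imp_le[OF lam] D(1) a2 al(1)])
      have Xeq: "X = B * (\<delta> powr (1 - \<alpha> / 2) * \<delta> powr (\<nu> * \<theta>))"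
      proof -
        have e1: "\<delta>\<^sup>2 * a powr (1 - (2 + \<alpha> / 2)) = \<delta> powr (1 - \<alpha> / 2) * \<delta> powr (\<nu> * \<theta>)"
        proof -
          have "\<delta>\<^sup>2 = \<delta> powr 2" using D by (simp add: powr_realpow)
          moreover have "a powr (1 - (2 + \<alpha> / 2)) = \<delta> powr ((1 - \<theta>) * (1 - (2 + \<alpha> / 2)))"
            unfolding a_def by (simp add: powr_powr)
          ultimately have "\<delta>\<^sup>2 * a powr (1 - (2 + \<alpha> / 2)) = \<delta> powr (2 + (1 - \<theta>) * (1 - (2 + \<alpha> / 2)))"
            by (simp add: powr_add)
          also have "2 + (1 - \<theta>) * (1 - (2 + \<alpha> / 2)) = (1 - \<alpha> / 2) + \<nu> * \<theta>"
            unfolding \<nu>_def by (simp add: field_simps)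
          finally show ?thesis by (simp add: powr_add)
        qed
        show ?thesis unfolding X_def B_def d_def
          using e1 by (simp add: field_simps)
      qed
      have X0: "X \<ge> 0" using Xeq B D by simp
      have "Pi_abs \<kappa> lam \<Lambda> \<delta> ({a<..} \<times> UNIV \<times> UNIV) \<le> ennreal (1 / T) * ennreal X"
        using PB NSb by (meson mult_left_mono order_trans zero_le)
      also have "\<dots> = ennreal (X / T)" using T X0 by (subst ennreal_mult[symmetric]) auto
      also have "X / T \<le> X / (T0 * \<delta> powr (1 - \<alpha> / 2))"
        using X0 Tlow T0 dpos T by (intro divide_left_mono) (auto intro!: mult_pos_pos)
      also have "\<dots> = B / T0 * \<delta> powr (\<nu> * \<theta>)" unfolding Xeq using dpos T0 by (simp add: field_simps)
      also have "\<dots> \<le> C * \<delta> powr (\<nu> * \<theta>)"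
      proof -
        have "B / T0 \<le> C" unfolding C_def using M T0 by (simp add: add_increasing2)
        then show ?thesis by (intro mult_right_mono) auto
      qed
      finally show ?thesis by (simp add: ennreal_leI)
    next
      case False
      then have big: "\<delta> powr \<theta> > 1 / 2" by simp
      have NSb: "NS \<le> ennreal M"
        unfolding NS_def M_def PR_def by (rule N_large[OF sets HK K lam al])
      have "Pi_abs \<kappa> lam \<Lambda> \<delta> ({a<..} \<times> UNIV \<times> UNIV) \<le> ennreal (1 / T) * ennreal M"
        using PB NSb by (meson mult_left_mono order_trans zero_le)
      also have "\<dots> = ennreal (M / T)" using T M by (subst ennreal_mult[symmetric]) auto
      also have "M / T \<le> C * \<delta> powr (\<nu> * \<theta>)"
      proof -
        have "M / T \<le> M / (T0 * \<delta> powr (1 - \<alpha> / 2))"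
          using M Tlow T0 dpos T by (intro divide_left_mono) (auto intro!: mult_pos_pos)
        also have "\<dots> \<le> M / (T0 * \<delta>)"
        proof -
          have "\<delta> powr 1 \<le> \<delta> powr (1 - \<alpha> / 2)" using D al by (intro powr_mono') auto
          then have "\<delta> \<le> \<delta> powr (1 - \<alpha> / 2)" using D by simp
          then show ?thesis using M T0 D by (intro divide_left_mono mult_left_mono mult_pos_pos) auto
        qed
        also have "\<dots> = M / T0 * (1 / \<delta>)" by simp
        also have "\<dots> \<le> M / T0 * 2 powr (1 / \<theta>)"
        proof -
          have "\<delta> = (\<delta> powr \<theta>) powr (1 / \<theta>)" using th D by (simp add: powr_powr)
          moreover have "(1 / 2) powr (1 / \<theta>) \<le> (\<delta> powr \<theta>) powr (1 / \<theta>)"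
            using big th by (intro powr_mono2) auto
          ultimately have "1 / 2 powr (1 / \<theta>) \<le> \<delta>" by (simp add: powr_divide)
          then have "1 / \<delta> \<le> 2 powr (1 / \<theta>)" using D by (simp add: field_simps)
          then show ?thesis using M T0 by (intro mult_left_mono) auto
        qed
        also have "\<dots> \<le> M / T0 * 2 powr (1 / \<theta>) * (2 powr \<nu> * \<delta> powr (\<nu> * \<theta>))"
        proof -
          have "(1 / 2) powr \<nu> \<le> (\<delta> powr \<theta>) powr \<nu>" using big nu by (intro powr_mono2) auto
          then have "(1 / 2) powr \<nu> \<le> \<delta> powr (\<nu> * \<theta>)" by (simp add: powr_powr mult.commute)
          then have "2 powr \<nu> * (1 / 2) powr \<nu> \<le> 2 powr \<nu> * \<delta> powr (\<nu> * \<theta>)" by (intro mult_left_mono) auto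
          moreover have "2 powr \<nu> * (1 / 2) powr \<nu> = 1" by (simp add: powr_mult[symmetric])
          ultimately have "1 \<le> 2 powr \<nu> * \<delta> powr (\<nu> * \<theta>)" by simp
          then have "M / T0 * 2 powr (1 / \<theta>) * 1 \<le> M / T0 * 2 powr (1 / \<theta>) * (2 powr \<nu> * \<delta> powr (\<nu> * \<theta>))"
            by (rule mult_left_mono) (use M T0 in auto)
          then show ?thesis by simp
        qed
        also have "\<dots> = (M / T0 * 2 powr (1 / \<theta>) * 2 powr \<nu>) * \<delta> powr (\<nu> * \<theta>)" by (simp add: mult_ac)
        also have "\<dots> \<le> C * \<delta> powr (\<nu> * \<theta>)"
        proof -
          have "M / T0 * 2 powr (1 / \<theta>) * 2 powr \<nu> \<le> C" unfolding C_def using B T0 by simp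
          then show ?thesis by (intro mult_right_mono) auto
        qed
        finally show ?thesis .
      qed
      finally show ?thesis by (simp add: ennreal_leI)
    qed
    then show "Pi_abs \<kappa> lam \<Lambda> (\<Delta> n) ({\<Delta> n powr (1 - \<theta>)<..} \<times> UNIV \<times> UNIV)
                     \<le> ennreal (C * \<Delta> n powr ((1 + \<alpha> / 2) * \<theta>))"
      unfolding \<delta>_def a_def \<nu>_def .
  qed
qed

end
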